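(* Let $T$ be a supercritical Bienaym\'e–Galton–Watson tree as in the context, with extinction probability $q$ and offspring generating function $f$, and let $\varepsilon_0>0$ satisfy $0<q+2\varepsilon_0<1$ and $f'(q+2\varepsilon_0)+2\varepsilon_0<1$. Let $\mathcal P$ be a (measurable) property of rooted labelled trees with resistances on their edges, and suppose $$\Pr\{T^j\text{ does not have property }\mathcal P\mid \langle j\rangle\in T_1\}\le q+2\varepsilon_0.$$ Then (a) with probability one, for every infinite path $\langle i_1\rangle,\langle i_1,i_2\rangle,\dots$ in $T$ there exist infinitely many $n$ and integers $j_{n+1}\ne i_{n+1}$ with $\langle i_1,\dots,i_n,j_{n+1}\rangle\in T$ and such that $T^{j_{n+1}}(i_1,\dots,i_n)$ has property $\mathcal P$; (b) if $\Gamma(i_1,\dots,i_n)$ denotes the number of $k\in\{2,\dots,n\}$ for which there exists $j_k\ne i_k$ with $\langle i_1,\dots,i_{k-1},j_k\rangle\in T$ and $T^{j_k}(i_1,\dots,i_{k-1})$ having property $\mathcal P$, then there are constants $0<C_1,C_2<\infty$ such that for all $n\ge 2$ $$\Pr\Big\{T_n\ne\emptyset\text{ and }\min_{\langle i_1,\dots,i_n\rangle\in T_n}\Gamma(i_1,\dots,i_n)\le C_1 n\Big\}\le e^{-C_2 n}.$$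
   Context: $T$ is the Ulam–Harris-labelled family tree of a Bienaym\'e–Galton–Watson process with $Z_0=1$, offspring mean $1<\gamma=\mathbb E Z_1<\infty$, offspring generating function $f(z)=\sum_n\Pr\{Z_1=n\}z^n$ and extinction probability $q<1$; root $\langle 0\rangle$, children of $\langle i_1,\dots,i_{k-1}\rangle$ are $\langle i_1,\dots,i_k\rangle$; $T_k$ is the $k$th generation. Each edge has an independent resistance with distribution function $F$ on $[0,\infty)$, independent of the tree. For $\langle i_1,\dots,i_n,j\rangle\in T$ ($n\ge 0$; for $n=0$ read $\langle i_1,\dots,i_n\rangle$ as $\langle 0\rangle$), $T^j(i_1,\dots,i_n)$ is the subtree of $T$ (with its resistances) whose vertices are $\langle i_1,\dots,i_n\rangle$, $\langle i_1,\dots,i_n,j\rangle$ and all descendants of $\langle i_1,\dots,i_n,j\rangle$, rooted at $\langle i_1,\dots,i_n\rangle$; $T^j=T^j(0)$. *)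

theory Defs
  imports "HOL-Probability.Probability"
begin

text \<open>A vertex is a list of positive integers; the root
  \<open>\<langle>0\<rangle>\<close> is the empty list and \<open>\<langle>i1,...,ik\<rangle>\<close> is the list [i1,...,ik].
  \<open>N v \<omega>\<close> is the number of children of vertex v (used only if v is in the tree),
  the children of v being v @ [j] for 1 \<le> j \<le> N v \<omega>.
  \<open>R v \<omega>\<close> is the resistance of the edge joining v (v \<noteq> []) to its parent.\<close>

definition in_tree :: "(nat list \<Rightarrow> 'a \<Rightarrow> nat) \<Rightarrow> 'a \<Rightarrow> nat list \<Rightarrow> bool" where
  "in_tree N \<omega> v \<longleftrightarrow> (\<forall>k < length v. 1 \<le> v ! k \<and> v ! k \<le> N (take k v) \<omega>)"

definition generation :: "(nat list \<Rightarrow> 'a \<Rightarrow> nat) \<Rightarrow> 'a \<Rightarrow> nat \<Rightarrow> nat list set" where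
  "generation N \<omega> k = {v. length v = k \<and> in_tree N \<omega> v}"

definition extinction_prob :: "'a measure \<Rightarrow> (nat list \<Rightarrow> 'a \<Rightarrow> nat) \<Rightarrow> real" where
  "extinction_prob M N = measure M {\<omega> \<in> space M. \<exists>k. generation N \<omega> k = {}}"

text \<open>Rooted labelled trees with edge resistances are encoded as functions
  \<open>t :: nat list \<Rightarrow> bool \<times> real\<close>: fst (t w) says whether w is a vertex, snd (t w)
  is the resistance of the edge from w to its parent (0 for the root and for
  non-vertices).\<close>
definition tree_space :: "(nat list \<Rightarrow> bool \<times> real) measure" where
  "tree_space = PiM UNIV (\<lambda>_. count_space UNIV \<Otimes>\<^sub>M borel)"

text \<open>The subtree T^j(u): vertices u, u@[j] and all descendants of u@[j], rooted at u.
  It is relabelled by stripping the prefix u, so that its root is [] and the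
  child of the root is [j] (the labels below u are kept).\<close>
definition subtree ::
  "(nat list \<Rightarrow> 'a \<Rightarrow> nat) \<Rightarrow> (nat list \<Rightarrow> 'a \<Rightarrow> real) \<Rightarrow> nat list \<Rightarrow> nat \<Rightarrow> 'a
     \<Rightarrow> nat list \<Rightarrow> bool \<times> real" where
  "subtree N R u j \<omega> w =
     (if w = [] then (True, 0)
      else if hd w = j \<and> in_tree N \<omega> (u @ w) then (True, R (u @ w) \<omega>)
      else (False, 0))"

definition gen_fun :: "nat pmf \<Rightarrow> real \<Rightarrow> real" where
  "gen_fun p z = (\<Sum>n. pmf p n * z ^ n)"

definition Gamma ::
  "(nat list \<Rightarrow> 'a \<Rightarrow> nat) \<Rightarrow> (nat list \<Rightarrow> 'a \<Rightarrow> real) \<Rightarrow> ((nat list \<Rightarrow> bool \<times> real) \<Rightarrow> bool)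
     \<Rightarrow> 'a \<Rightarrow> nat list \<Rightarrow> nat" where
  "Gamma N R P \<omega> v = card {k \<in> {2..length v}. \<exists>j. j \<noteq> v ! (k - 1)
       \<and> in_tree N \<omega> (take (k - 1) v @ [j]) \<and> P (subtree N R (take (k - 1) v) j \<omega>)}"

end

theory Submission
  imports Defs
begin


definition DD :: "(nat \<times> real) measure" where "DD = count_space UNIV \<Otimes>\<^sub>M borel"

definition Hs :: "nat \<Rightarrow> (nat list \<Rightarrow> nat \<times> real) \<Rightarrow> nat list \<Rightarrow> bool \<times> real" where
 "Hs j x w = (if w = [] then (True, 0) else if hd w = j \<and> (\<forall>k\<in>{1..<length w}. 1 \<le> w!k \<and> w!k \<le> fst (x (take k w)))
     then (True, snd (x w)) else (False, 0))"

lemma comp_meas[measurable]: "(\<lambda>y. y z) \<in> measurable (PiM I (\<lambda>_. DD)) DD"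
proof (cases "z \<in> I")
  case True then show ?thesis by measurable
next
  case False
  have "\<forall>y\<in>space (PiM I (\<lambda>_. DD)). y z = undefined" using False by (auto simp: space_PiM PiE_def extensional_def)
  then show ?thesis by (subst measurable_cong[where g="\<lambda>_. undefined"]) (auto simp: DD_def space_pair_measure)
qed

lemma comp_fst_meas[measurable]: "(\<lambda>y. fst (y z)) \<in> measurable (PiM I (\<lambda>_. DD)) (count_space UNIV)"
  using measurable_compose[OF comp_meas[unfolded DD_def] measurable_fst] by (simp add: DD_def)
lemma comp_snd_meas[measurable]: "(\<lambda>y. snd (y z)) \<in> borel_measurable (PiM I (\<lambda>_. DD))"
  using measurable_compose[OF comp_meas[unfolded DD_def] measurable_snd] by (simp add: DD_def)

lemma Hs_meas[measurable]: "Hs j \<in> measurable (PiM I (\<lambda>_. DD)) tree_space"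
  unfolding tree_space_def
proof (rule measurable_PiM_single')
  fix w :: "nat list"
  show "(\<lambda>x. Hs j x w) \<in> measurable (PiM I (\<lambda>_. DD)) (count_space UNIV \<Otimes>\<^sub>M borel)"
    unfolding Hs_def by measurable
qed (auto simp: space_PiM space_pair_measure)




lemma shift_meas[measurable]: "(\<lambda>y w. y (u @ w)) \<in> measurable (PiM I (\<lambda>_. DD)) (PiM UNIV (\<lambda>_. DD))"
  by (rule measurable_PiM_single'[OF comp_meas]) (auto simp: space_PiM DD_def space_pair_measure)

locale gw = prob_space M for M :: "'a measure" +
  fixes N :: "nat list \<Rightarrow> 'a \<Rightarrow> nat" and R :: "nat list \<Rightarrow> 'a \<Rightarrow> real" and p :: "nat pmf" and Fd :: "real measure"
  assumes N_meas[measurable]: "\<And>v. N v \<in> measurable M (count_space UNIV)"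
    and R_meas[measurable]: "\<And>v. R v \<in> borel_measurable M"
    and Fd_prob: "prob_space Fd" and Fd_sets: "sets Fd = sets borel"
    and NR_distr: "\<And>v. distr M (count_space UNIV \<Otimes>\<^sub>M borel) (\<lambda>\<omega>. (N v \<omega>, R v \<omega>))
                     = measure_pmf p \<Otimes>\<^sub>M Fd"
    and indep: "indep_vars (\<lambda>_. count_space UNIV \<Otimes>\<^sub>M borel) (\<lambda>v \<omega>. (N v \<omega>, R v \<omega>)) UNIV"
begin

definition X :: "nat list \<Rightarrow> 'a \<Rightarrow> nat \<times> real" where "X v \<omega> = (N v \<omega>, R v \<omega>)"
definition Y :: "nat list \<Rightarrow> 'a \<Rightarrow> nat list \<Rightarrow> nat \<times> real" where "Y u \<omega> = (\<lambda>w. X (u @ w) \<omega>)"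

lemma X_meas[measurable]: "X v \<in> measurable M DD"
  unfolding X_def DD_def by measurable

lemma Y_meas[measurable]: "Y u \<in> measurable M (PiM UNIV (\<lambda>_. DD))"
  unfolding Y_def by (rule measurable_PiM_single'[OF X_meas]) (auto simp: space_PiM DD_def space_pair_measure)

lemma indep_X: "indep_vars (\<lambda>_. DD) X UNIV"
  using indep unfolding DD_def X_def[abs_def] by simp

lemma indep_reindex:
  assumes "inj_on f I"
  shows "indep_vars (\<lambda>_. DD) (\<lambda>i \<omega>. X (f i) \<omega>) I"
proof -
  have "indep_vars (\<lambda>j. PiM {f j} (\<lambda>_. DD)) (\<lambda>j \<omega>. restrict (\<lambda>i. X i \<omega>) {f j}) I"
    by (rule indep_vars_restrict[OF indep_X]) (use assms in \<open>auto simp: disjoint_family_on_def inj_on_def\<close>)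
  then have "indep_vars (\<lambda>_. DD) (\<lambda>j \<omega>. (\<lambda>y. y (f j)) (restrict (\<lambda>i. X i \<omega>) {f j})) I"
    by (rule indep_vars_compose2) simp
  then show ?thesis by simp
qed

lemma DD_distr: "distr M DD (X v) = measure_pmf p \<Otimes>\<^sub>M Fd"
proof -
  have "(\<lambda>\<omega>. (N v \<omega>, R v \<omega>)) = X v" by (simp add: X_def fun_eq_iff)
  then show ?thesis using NR_distr[of v] unfolding DD_def by simp
qed

lemma Y_distr: "distr M (PiM UNIV (\<lambda>_. DD)) (Y u) = PiM UNIV (\<lambda>_. measure_pmf p \<Otimes>\<^sub>M Fd)"
proof -
  have ind: "indep_vars (\<lambda>_. DD) (\<lambda>i \<omega>. X (u @ i) \<omega>) UNIV"
    by (rule indep_reindex) (auto simp: inj_on_def)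
  have "distr M (PiM UNIV (\<lambda>_. DD)) (\<lambda>x. \<lambda>i\<in>UNIV. X (u @ i) x) = (PiM UNIV (\<lambda>i. distr M DD (X (u @ i))))"
  proof -
    have e: "indep_vars (\<lambda>_. DD) (\<lambda>i \<omega>. X (u @ i) \<omega>) UNIV \<longleftrightarrow> distr M (PiM UNIV (\<lambda>_. DD)) (\<lambda>x. \<lambda>i\<in>UNIV. X (u @ i) x) = (PiM UNIV (\<lambda>i. distr M DD (X (u @ i))))"
      apply (rule indep_vars_iff_distr_eq_PiM) apply simp apply (rule X_meas) done
    show ?thesis using e ind by blast
  qed
  moreover have "(\<lambda>x. \<lambda>i\<in>UNIV. X (u @ i) x) = Y u" by (simp add: Y_def fun_eq_iff)
  ultimately show ?thesis unfolding DD_distr by simp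
qed

lemma nn_integral_Y:
  assumes [measurable]: "\<Psi> \<in> borel_measurable (PiM UNIV (\<lambda>_. DD))"
  shows "(\<integral>\<^sup>+\<omega>. \<Psi> (Y u \<omega>) \<partial>M) = (\<integral>\<^sup>+\<omega>. \<Psi> (Y [] \<omega>) \<partial>M)"
proof -
  have "(\<integral>\<^sup>+\<omega>. \<Psi> (Y u \<omega>) \<partial>M) = (\<integral>\<^sup>+x. \<Psi> x \<partial>(distr M (PiM UNIV (\<lambda>_. DD)) (Y u)))"
    by (simp add: nn_integral_distr)
  also have "\<dots> = (\<integral>\<^sup>+x. \<Psi> x \<partial>(distr M (PiM UNIV (\<lambda>_. DD)) (Y [])))"
    unfolding Y_distr ..
  also have "\<dots> = (\<integral>\<^sup>+\<omega>. \<Psi> (Y [] \<omega>) \<partial>M)"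
    by (simp add: nn_integral_distr)
  finally show ?thesis .
qed

lemma block_indep:
  assumes "disjoint_family_on K L"
    and [measurable]: "\<And>j. j \<in> L \<Longrightarrow> \<Phi> j \<in> borel_measurable (PiM (K j) (\<lambda>_. DD))"
  shows "indep_vars (\<lambda>_. borel) (\<lambda>j \<omega>. \<Phi> j (restrict (\<lambda>z. X z \<omega>) (K j))) L"
proof -
  have "indep_vars (\<lambda>j. PiM (K j) (\<lambda>_. DD)) (\<lambda>j \<omega>. restrict (\<lambda>i. X i \<omega>) (K j)) L"
    by (rule indep_vars_restrict[OF indep_X]) (use assms in auto)
  then show ?thesis
    by (rule indep_vars_compose2) (rule assms(2))
qed

end



lemma in_tree_append:
  "in_tree N \<omega> (u @ w) \<longleftrightarrow> in_tree N \<omega> u \<and> (\<forall>k<length w. 1 \<le> w!k \<and> w!k \<le> N (u @ take k w) \<omega>)"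
proof
  assume a: "in_tree N \<omega> (u @ w)"
  have "in_tree N \<omega> u"
    unfolding in_tree_def
  proof (intro allI impI)
    fix k assume "k < length u"
    with a[unfolded in_tree_def, rule_format, of k] show "1 \<le> u ! k \<and> u ! k \<le> N (take k u) \<omega>"
      by (simp add: nth_append)
  qed
  moreover have "\<forall>k<length w. 1 \<le> w!k \<and> w!k \<le> N (u @ take k w) \<omega>"
  proof (intro allI impI)
    fix k assume "k < length w"
    with a[unfolded in_tree_def, rule_format, of "length u + k"] show "1 \<le> w!k \<and> w!k \<le> N (u @ take k w) \<omega>"
      by (simp add: nth_append)
  qed
  ultimately show "in_tree N \<omega> u \<and> (\<forall>k<length w. 1 \<le> w!k \<and> w!k \<le> N (u @ take k w) \<omega>)" by blast
next
  assume a: "in_tree N \<omega> u \<and> (\<forall>k<length w. 1 \<le> w!k \<and> w!k \<le> N (u @ take k w) \<omega>)"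
  show "in_tree N \<omega> (u @ w)"
    unfolding in_tree_def
  proof (intro allI impI)
    fix k assume k: "k < length (u @ w)"
    show "1 \<le> (u @ w) ! k \<and> (u @ w) ! k \<le> N (take k (u @ w)) \<omega>"
    proof (cases "k < length u")
      case True then show ?thesis using a by (simp add: nth_append in_tree_def)
    next
      case False
      then obtain k' where "k = length u + k'" by (metis le_Suc_ex not_less)
      with k False a show ?thesis by (simp add: nth_append)
    qed
  qed
qed

lemma in_tree_snoc:
  "in_tree N \<omega> (u @ [j]) \<longleftrightarrow> in_tree N \<omega> u \<and> 1 \<le> j \<and> j \<le> N u \<omega>"
  by (simp add: in_tree_append)

lemma in_tree_take: "in_tree N \<omega> v \<Longrightarrow> in_tree N \<omega> (take k v)"
  using in_tree_append[of N \<omega> "take k v" "drop k v"] by simp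

lemma in_tree_take_nth: "in_tree N \<omega> v \<Longrightarrow> k < length v \<Longrightarrow> 1 \<le> v!k \<and> v!k \<le> N (take k v) \<omega>"
  unfolding in_tree_def by blast

lemma Hs_cong:
  assumes "\<And>w. w \<noteq> [] \<Longrightarrow> hd w = j \<Longrightarrow> x w = x' w"
  shows "Hs j x = Hs j x'"
proof
  fix w show "Hs j x w = Hs j x' w"
  proof (cases "w \<noteq> [] \<and> hd w = j")
    case True
    have "\<forall>k\<in>{1..<length w}. x (take k w) = x' (take k w)"
    proof
      fix k assume "k \<in> {1..<length w}"
      then have "take k w \<noteq> []" "hd (take k w) = j" using True by (auto simp: hd_take)
      then show "x (take k w) = x' (take k w)" by (rule assms)
    qed
    then show ?thesis using True assms[of w] unfolding Hs_def by auto
  qed (auto simp: Hs_def)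
qed

lemma finite_generation: "finite (generation N \<omega> n)"
proof (induction n)
  case 0
  have "generation N \<omega> 0 \<subseteq> {[]}" by (auto simp: generation_def)
  then show ?case by (rule finite_subset) simp
next
  case (Suc n)
  have "generation N \<omega> (Suc n) \<subseteq> (\<lambda>(v, j). v @ [j]) ` (SIGMA v:generation N \<omega> n. {..N v \<omega>})"
  proof
    fix v assume "v \<in> generation N \<omega> (Suc n)"
    then have v: "length v = Suc n" "in_tree N \<omega> v" by (auto simp: generation_def)
    then obtain u j where u: "v = u @ [j]" by (metis length_Suc_conv_rev)
    with v have "u \<in> generation N \<omega> n" "j \<le> N u \<omega>" by (auto simp: generation_def in_tree_snoc)
    then show "v \<in> (\<lambda>(v, j). v @ [j]) ` (SIGMA v:generation N \<omega> n. {..N v \<omega>})" using u by force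
  qed
  then show ?case by (rule finite_subset) (use Suc in auto)
qed




locale gwP = gw +
  fixes P :: "(nat list \<Rightarrow> bool \<times> real) \<Rightarrow> bool" and lam :: real
  assumes P_meas[measurable]: "Measurable.pred tree_space P" and lam_nn: "0 \<le> lam"
begin

definition Psi :: "nat \<Rightarrow> (nat list \<Rightarrow> nat \<times> real) \<Rightarrow> real" where
  "Psi i x = (if 1 \<le> i \<and> i \<le> fst (x []) then
     (if \<exists>j. j \<noteq> i \<and> 1 \<le> j \<and> j \<le> fst (x []) \<and> P (Hs j x) then lam else 1) else 0)"

definition Psi0 :: "nat \<Rightarrow> (nat list \<Rightarrow> nat \<times> real) \<Rightarrow> real" where
  "Psi0 i x = (if 1 \<le> i \<and> i \<le> fst (x []) then 1 else 0)"

lemma P_Hs_meas[measurable]: "Measurable.pred (PiM I (\<lambda>_. DD)) (\<lambda>x. P (Hs j x))"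
  using measurable_compose[OF Hs_meas P_meas] .

lemma Psi_meas[measurable]: "Psi i \<in> borel_measurable (PiM I (\<lambda>_. DD))"
  unfolding Psi_def by measurable

lemma Psi0_meas[measurable]: "Psi0 i \<in> borel_measurable (PiM I (\<lambda>_. DD))"
  unfolding Psi0_def by measurable

lemma Psi_nn: "0 \<le> Psi i x" "0 \<le> Psi0 i x"
  using lam_nn by (auto simp: Psi_def Psi0_def)

lemma Psi_cong:
  assumes "x [] = x' []" "\<And>w. w \<noteq> [] \<Longrightarrow> hd w \<noteq> i \<Longrightarrow> x w = x' w"
  shows "Psi i x = Psi i x'"
proof -
  have "Hs j x = Hs j x'" if "j \<noteq> i" for j
    by (rule Hs_cong) (use assms that in auto)
  then show ?thesis unfolding Psi_def using assms(1) by auto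
qed

definition F :: "nat list \<Rightarrow> nat \<Rightarrow> 'a \<Rightarrow> real" where
  "F v k \<omega> = (if k = 0 then Psi0 (v!0) (Y [] \<omega>) else Psi (v!k) (Y (take k v) \<omega>))"

definition Kb :: "nat list \<Rightarrow> nat \<Rightarrow> nat list set" where
  "Kb v k = {take k v @ w | w. w = [] \<or> hd w \<noteq> v!k}"

definition Phi :: "nat list \<Rightarrow> nat \<Rightarrow> (nat list \<Rightarrow> nat \<times> real) \<Rightarrow> real" where
  "Phi v k y = (if k = 0 then Psi0 (v!0) (\<lambda>w. y (take k v @ w)) else Psi (v!k) (\<lambda>w. y (take k v @ w)))"

lemma Phi_meas[measurable]: "Phi v k \<in> borel_measurable (PiM I (\<lambda>_. DD))"
  unfolding Phi_def by measurable

lemma F_meas[measurable]: "F v k \<in> borel_measurable M"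
  unfolding F_def by measurable

lemma F_nn: "0 \<le> F v k \<omega>"
  using Psi_nn by (simp add: F_def)

lemma F_block: "F v k \<omega> = Phi v k (restrict (\<lambda>z. X z \<omega>) (Kb v k))"
proof -
  define x where "x = Y (take k v) \<omega>"
  define x' where "x' = (\<lambda>w. restrict (\<lambda>z. X z \<omega>) (Kb v k) (take k v @ w))"
  have m0: "take k v @ [] \<in> Kb v k" unfolding Kb_def by blast
  have m1: "take k v @ w \<in> Kb v k" if "hd w \<noteq> v!k" for w unfolding Kb_def using that by blast
  have e0: "x [] = x' []" using m0 by (simp add: x_def x'_def Y_def)
  have e1: "x w = x' w" if "w \<noteq> []" "hd w \<noteq> v!k" for w
    using m1[OF that(2)] by (simp add: x_def x'_def Y_def)
  have "Psi (v!k) x = Psi (v!k) x'" by (rule Psi_cong) (use e0 e1 in auto)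
  moreover have "Psi0 (v!k) x = Psi0 (v!k) x'" using e0 by (simp add: Psi0_def)
  ultimately show ?thesis unfolding F_def Phi_def x_def x'_def by (cases "k = 0") simp_all
qed

lemma Kb_disj: "disjoint_family_on (Kb v) {..<length v}"
proof -
  have F: False if kk: "k < k'" "k' < length v" and z1: "z = take k v @ w" "w = [] \<or> hd w \<noteq> v!k"
    and z2: "z = take k' v @ w'" for k k' z w w'
  proof -
    have "take k (take k' v) = take k v" using kk by (simp add: min_def)
    then have tk: "take k' v = take k v @ drop k (take k' v)"
      using append_take_drop_id[of k "take k' v"] by simp
    have e: "take k v @ w = take k' v @ w'" using z1 z2 by simp
    have "take k' v @ w' = take k v @ (drop k (take k' v) @ w')" using tk by (metis append.assoc)
    with e have "take k v @ w = take k v @ (drop k (take k' v) @ w')" by simp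
    then have "w = drop k (take k' v) @ w'" by simp
    moreover have "drop k (take k' v) \<noteq> []" using kk by simp
    moreover have "hd (drop k (take k' v)) = v ! k" using kk by (simp add: hd_drop_conv_nth)
    ultimately show False using z1(2) by simp
  qed
  show ?thesis unfolding disjoint_family_on_def
  proof (intro ballI impI)
    fix m n assume mn: "m \<in> {..<length v}" "n \<in> {..<length v}" "m \<noteq> n"
    show "Kb v m \<inter> Kb v n = {}"
    proof (rule ccontr)
      assume "Kb v m \<inter> Kb v n \<noteq> {}"
      then obtain z w w' where z: "z = take m v @ w" "w = [] \<or> hd w \<noteq> v!m" "z = take n v @ w'" "w' = [] \<or> hd w' \<noteq> v!n"
        unfolding Kb_def by blast
      show False
      proof (cases "m < n")
        case True then show False using F[of m n z w w'] z mn by auto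
      next
        case False then have "n < m" using mn by auto
        then show False using F[of n m z w' w] z mn by auto
      qed
    qed
  qed
qed

lemma F_indep: "indep_vars (\<lambda>_. borel) (F v) {..<length v}"
proof -
  have "indep_vars (\<lambda>_. borel) (\<lambda>k \<omega>. Phi v k (restrict (\<lambda>z. X z \<omega>) (Kb v k))) {..<length v}"
    by (rule block_indep[OF Kb_disj]) simp
  then show ?thesis by (simp add: F_block[abs_def])
qed

lemma F_prod: "(\<integral>\<^sup>+\<omega>. ennreal (\<Prod>k<length v. F v k \<omega>) \<partial>M) = (\<Prod>k<length v. \<integral>\<^sup>+\<omega>. F v k \<omega> \<partial>M)"
proof -
  have ind: "indep_vars (\<lambda>_. borel) (\<lambda>k \<omega>. ennreal (F v k \<omega>)) {..<length v}"
    by (rule indep_vars_compose2[OF F_indep]) simp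
  have "(\<integral>\<^sup>+\<omega>. (\<Prod>k<length v. ennreal (F v k \<omega>)) \<partial>M) = (\<Prod>k<length v. \<integral>\<^sup>+\<omega>. F v k \<omega> \<partial>M)"
    by (rule indep_vars_nn_integral[OF _ ind]) auto
  then show ?thesis by (simp add: prod_ennreal F_nn)
qed

lemma F_int0: "(\<integral>\<^sup>+\<omega>. F v 0 \<omega> \<partial>M) = (\<integral>\<^sup>+\<omega>. Psi0 (v!0) (Y [] \<omega>) \<partial>M)"
  by (simp add: F_def)

lemma F_int: "k \<noteq> 0 \<Longrightarrow> (\<integral>\<^sup>+\<omega>. F v k \<omega> \<partial>M) = (\<integral>\<^sup>+\<omega>. Psi (v!k) (Y [] \<omega>) \<partial>M)"
  unfolding F_def using nn_integral_Y[of "\<lambda>x. ennreal (Psi (v!k) x)" "take k v"] by simp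

end



fun Ssum :: "nat \<Rightarrow> (nat list \<Rightarrow> ennreal) \<Rightarrow> ennreal" where
  "Ssum 0 f = f []"
| "Ssum (Suc n) f = (\<Sum>i. Ssum n (\<lambda>w. f (i # w)))"

lemma ennreal_le_suminf: "(f :: nat \<Rightarrow> ennreal) i \<le> (\<Sum>i. f i)"
  using sum_le_suminf[of f "{i}"] by (simp add: summableI)

lemma Ssum_ge: "length v = n \<Longrightarrow> f v \<le> Ssum n f"
proof (induction n arbitrary: v f)
  case 0 then show ?case by simp
next
  case (Suc n)
  then obtain i w where v: "v = i # w" "length w = n" by (metis length_Suc_conv)
  have "f v \<le> Ssum n (\<lambda>w. f (i # w))" using Suc.IH[of w "\<lambda>w. f (i # w)"] v by simp
  also have "\<dots> \<le> (\<Sum>i. Ssum n (\<lambda>w. f (i # w)))" by (rule ennreal_le_suminf)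
  finally show ?case by simp
qed

lemma Ssum_cmult: "Ssum n (\<lambda>v. c * f v) = c * Ssum n f"
  by (induction n arbitrary: f) (simp_all add: ennreal_suminf_cmult)

lemma Ssum_prod: "Ssum n (\<lambda>v. \<Prod>k<n. g k (v!k)) = (\<Prod>k<n. (\<Sum>i. g k i))"
proof (induction n arbitrary: g)
  case 0 then show ?case by simp
next
  case (Suc n)
  have "Ssum (Suc n) (\<lambda>v. \<Prod>k<Suc n. g k (v!k)) = (\<Sum>i. Ssum n (\<lambda>w. g 0 i * (\<Prod>k<n. g (Suc k) (w!k))))"
    by (simp del: prod.lessThan_Suc add: prod.lessThan_Suc_shift)
  also have "\<dots> = (\<Sum>i. g 0 i * (\<Prod>k<n. (\<Sum>j. g (Suc k) j)))"
    by (simp only: Ssum_cmult Suc.IH[of "\<lambda>k. g (Suc k)"])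
  also have "\<dots> = (\<Sum>i. g 0 i) * (\<Prod>k<n. (\<Sum>j. g (Suc k) j))"
    by (simp add: ennreal_suminf_multc)
  also have "\<dots> = (\<Prod>k<Suc n. (\<Sum>i. g k i))"
    by (simp del: prod.lessThan_Suc add: prod.lessThan_Suc_shift)
  finally show ?case .
qed

lemma Ssum_meas[measurable]:
  "(\<And>v. f v \<in> borel_measurable M) \<Longrightarrow> (\<lambda>\<omega>. Ssum n (\<lambda>v. f v \<omega>)) \<in> borel_measurable M"
proof (induction n arbitrary: f)
  case 0 then show ?case by simp
next
  case (Suc n)
  have "(\<lambda>\<omega>. Ssum n (\<lambda>w. f (i # w) \<omega>)) \<in> borel_measurable M" for i
    by (rule Suc.IH) (rule Suc.prems)
  then show ?case by (simp add: borel_measurable_suminf)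
qed

lemma Ssum_int:
  "(\<And>v. f v \<in> borel_measurable M) \<Longrightarrow> (\<integral>\<^sup>+\<omega>. Ssum n (\<lambda>v. f v \<omega>) \<partial>M) = Ssum n (\<lambda>v. \<integral>\<^sup>+\<omega>. f v \<omega> \<partial>M)"
proof (induction n arbitrary: f)
  case 0 then show ?case by simp
next
  case (Suc n)
  have m: "(\<lambda>\<omega>. Ssum n (\<lambda>w. f (i # w) \<omega>)) \<in> borel_measurable M" for i
    by (rule Ssum_meas) (rule Suc.prems)
  have "(\<integral>\<^sup>+\<omega>. Ssum (Suc n) (\<lambda>v. f v \<omega>) \<partial>M) = (\<Sum>i. \<integral>\<^sup>+\<omega>. Ssum n (\<lambda>w. f (i # w) \<omega>) \<partial>M)"
    by (simp add: nn_integral_suminf[OF m])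
  also have "\<dots> = (\<Sum>i. Ssum n (\<lambda>w. \<integral>\<^sup>+\<omega>. f (i # w) \<omega> \<partial>M))"
    using Suc.IH[of "\<lambda>w. f (i # w)" for i] Suc.prems by simp
  finally show ?case by simp
qed




context gw begin

lemma N_distr: "distr M (count_space UNIV) (N v) = measure_pmf p"
proof -
  have "distr M (count_space UNIV) (N v) = distr M (count_space UNIV) (fst \<circ> X v)"
    by (rule distr_cong) (auto simp: X_def)
  also have "\<dots> = distr (distr M DD (X v)) (count_space UNIV) fst"
    by (rule distr_distr[symmetric]) (auto simp: DD_def intro: X_meas[unfolded DD_def])
  also have "\<dots> = distr (measure_pmf p \<Otimes>\<^sub>M Fd) (measure_pmf p) fst"
    unfolding DD_distr by (rule distr_cong) auto
  also have "\<dots> = measure_pmf p"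
    by (rule prob_space.distr_pair_fst[OF Fd_prob])
  finally show ?thesis .
qed

lemma nn_integral_N: "(\<integral>\<^sup>+\<omega>. g (N v \<omega>) \<partial>M) = (\<Sum>m. ennreal (pmf p m) * g m)"
proof -
  have "(\<integral>\<^sup>+\<omega>. g (N v \<omega>) \<partial>M) = (\<integral>\<^sup>+m. g m \<partial>distr M (count_space UNIV) (N v))"
    by (rule nn_integral_distr[symmetric]) auto
  also have "\<dots> = (\<Sum>m. ennreal (pmf p m) * g m)"
    unfolding N_distr nn_integral_measure_pmf nn_integral_count_space_nat ..
  finally show ?thesis .
qed

lemma prob_N_eq: "emeasure M {\<omega> \<in> space M. N v \<omega> = m} = pmf p m"
proof -
  have "emeasure M {\<omega> \<in> space M. N v \<omega> = m} = emeasure (distr M (count_space UNIV) (N v)) {m}"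
    by (subst emeasure_distr) (auto intro!: arg_cong[where f="emeasure M"])
  then show ?thesis unfolding N_distr by (simp add: emeasure_pmf_single)
qed

definition Bk :: "nat \<Rightarrow> nat list set" where
  "Bk j = (if j = 0 then {[]} else {w. w \<noteq> [] \<and> hd w = j})"

lemma Bk_disj: "disjoint_family_on Bk L"
  unfolding disjoint_family_on_def Bk_def by auto

lemma root_prod:
  assumes "finite J" and [measurable]: "\<And>j. j \<in> J \<Longrightarrow> \<Phi> j \<in> borel_measurable (PiM (Bk j) (\<lambda>_. DD))"
    and nn: "\<And>j y. 0 \<le> \<Phi> j y"
  shows "(\<integral>\<^sup>+\<omega>. (\<Prod>j\<in>J. ennreal (\<Phi> j (restrict (\<lambda>z. X z \<omega>) (Bk j)))) \<partial>M)
       = (\<Prod>j\<in>J. \<integral>\<^sup>+\<omega>. ennreal (\<Phi> j (restrict (\<lambda>z. X z \<omega>) (Bk j))) \<partial>M)"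
proof -
  have "indep_vars (\<lambda>_. borel) (\<lambda>j \<omega>. \<Phi> j (restrict (\<lambda>z. X z \<omega>) (Bk j))) J"
    by (rule block_indep[OF Bk_disj]) (rule assms(2))
  then have ind: "indep_vars (\<lambda>_. borel) (\<lambda>j \<omega>. ennreal (\<Phi> j (restrict (\<lambda>z. X z \<omega>) (Bk j)))) J"
    by (rule indep_vars_compose2) simp
  show ?thesis
    by (rule indep_vars_nn_integral[OF assms(1) ind]) auto
qed

lemma restrict_Bk0: "restrict (\<lambda>z. X z \<omega>) (Bk 0) [] = X [] \<omega>"
  by (simp add: Bk_def)

lemma restrict_Bk_Hs: "j \<noteq> 0 \<Longrightarrow> Hs j (restrict (\<lambda>z. X z \<omega>) (Bk j)) = Hs j (Y [] \<omega>)"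
  by (rule Hs_cong) (simp add: Bk_def Y_def)

lemma restrict_Bk_Y: "j \<noteq> 0 \<Longrightarrow> (\<lambda>w. restrict (\<lambda>z. X z \<omega>) (Bk j) (j # w)) = Y [j] \<omega>"
  by (simp add: Bk_def Y_def)

end



lemma nn_integral_of_bool:
  assumes "Measurable.pred M Q"
  shows "(\<integral>\<^sup>+\<omega>. ennreal (of_bool (Q \<omega>)) \<partial>M) = emeasure M {\<omega> \<in> space M. Q \<omega>}"
proof -
  have "(\<integral>\<^sup>+\<omega>. ennreal (of_bool (Q \<omega>)) \<partial>M) = (\<integral>\<^sup>+\<omega>. indicator {\<omega> \<in> space M. Q \<omega>} \<omega> \<partial>M)"
    by (rule nn_integral_cong) (auto simp: indicator_def)
  also have "\<dots> = emeasure M {\<omega> \<in> space M. Q \<omega>}"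
    using assms by (intro nn_integral_indicator) auto
  finally show ?thesis .
qed

context gw begin

lemma shift_cons_meas[measurable]: "(\<lambda>y w. y (j # w)) \<in> measurable (PiM I (\<lambda>_. DD)) (PiM UNIV (\<lambda>_. DD))"
  using shift_meas[of "[j]"] by simp

lemma g_meas[measurable]: "(\<lambda>y. (g :: nat \<Rightarrow> real) (fst (y z))) \<in> borel_measurable (PiM I (\<lambda>_. DD))"
  using measurable_compose[OF comp_fst_meas, of g] by simp

lemma root_prod_Hs:
  assumes "finite S" "0 \<notin> S" and [measurable]: "\<And>j. h j \<in> borel_measurable tree_space"
    and nn: "\<And>j t. 0 \<le> h j t" "\<And>m. 0 \<le> g m"
  shows "(\<integral>\<^sup>+\<omega>. ennreal (g (N [] \<omega>)) * (\<Prod>j\<in>S. ennreal (h j (Hs j (Y [] \<omega>)))) \<partial>M)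
       = (\<integral>\<^sup>+\<omega>. ennreal (g (N [] \<omega>)) \<partial>M) * (\<Prod>j\<in>S. \<integral>\<^sup>+\<omega>. ennreal (h j (Hs j (Y [] \<omega>))) \<partial>M)"
proof -
  define \<Phi> where "\<Phi> j y = (if j = 0 then g (fst (y [])) else h j (Hs j y))" for j y
  have m: "\<Phi> j \<in> borel_measurable (PiM (Bk j) (\<lambda>_. DD))" for j
    unfolding \<Phi>_def by (cases "j = 0") simp_all
  have e0: "\<Phi> 0 (restrict (\<lambda>z. X z \<omega>) (Bk 0)) = g (N [] \<omega>)" for \<omega>
    unfolding \<Phi>_def by (simp add: Bk_def X_def)
  have ej: "\<Phi> j (restrict (\<lambda>z. X z \<omega>) (Bk j)) = h j (Hs j (Y [] \<omega>))" if "j \<in> S" for j \<omega>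
    using that assms(2) unfolding \<Phi>_def by (auto simp: restrict_Bk_Hs)
  have "(\<integral>\<^sup>+\<omega>. (\<Prod>j\<in>insert 0 S. ennreal (\<Phi> j (restrict (\<lambda>z. X z \<omega>) (Bk j)))) \<partial>M)
       = (\<Prod>j\<in>insert 0 S. \<integral>\<^sup>+\<omega>. ennreal (\<Phi> j (restrict (\<lambda>z. X z \<omega>) (Bk j))) \<partial>M)"
    by (rule root_prod) (use assms m nn in \<open>auto simp: \<Phi>_def\<close>)
  moreover have "(\<Prod>j\<in>insert 0 S. ennreal (\<Phi> j (restrict (\<lambda>z. X z \<omega>) (Bk j))))
     = ennreal (g (N [] \<omega>)) * (\<Prod>j\<in>S. ennreal (h j (Hs j (Y [] \<omega>))))" for \<omega>
    using assms(1,2) by (simp add: e0 ej)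
  moreover have "(\<Prod>j\<in>insert 0 S. \<integral>\<^sup>+\<omega>. ennreal (\<Phi> j (restrict (\<lambda>z. X z \<omega>) (Bk j))) \<partial>M)
     = (\<integral>\<^sup>+\<omega>. ennreal (g (N [] \<omega>)) \<partial>M) * (\<Prod>j\<in>S. \<integral>\<^sup>+\<omega>. ennreal (h j (Hs j (Y [] \<omega>))) \<partial>M)"
    using assms(1,2) by (simp add: e0 ej cong: prod.cong)
  ultimately show ?thesis by simp
qed

lemma root_prod_Y:
  assumes "finite S" "0 \<notin> S" and [measurable]: "\<And>j. h j \<in> borel_measurable (PiM UNIV (\<lambda>_. DD))"
    and nn: "\<And>j t. 0 \<le> h j t" "\<And>m. 0 \<le> g m"
  shows "(\<integral>\<^sup>+\<omega>. ennreal (g (N [] \<omega>)) * (\<Prod>j\<in>S. ennreal (h j (Y [j] \<omega>))) \<partial>M)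
       = (\<integral>\<^sup>+\<omega>. ennreal (g (N [] \<omega>)) \<partial>M) * (\<Prod>j\<in>S. \<integral>\<^sup>+\<omega>. ennreal (h j (Y [j] \<omega>)) \<partial>M)"
proof -
  define \<Phi> where "\<Phi> j y = (if j = 0 then g (fst (y [])) else h j (\<lambda>w. y ([j] @ w)))" for j y
  have m: "\<Phi> j \<in> borel_measurable (PiM (Bk j) (\<lambda>_. DD))" for j
    unfolding \<Phi>_def by (cases "j = 0") simp_all
  have e0: "\<Phi> 0 (restrict (\<lambda>z. X z \<omega>) (Bk 0)) = g (N [] \<omega>)" for \<omega>
    unfolding \<Phi>_def by (simp add: Bk_def X_def)
  have ej: "\<Phi> j (restrict (\<lambda>z. X z \<omega>) (Bk j)) = h j (Y [j] \<omega>)" if "j \<in> S" for j \<omega>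
    using that assms(2) restrict_Bk_Y[of j \<omega>] unfolding \<Phi>_def by auto
  have "(\<integral>\<^sup>+\<omega>. (\<Prod>j\<in>insert 0 S. ennreal (\<Phi> j (restrict (\<lambda>z. X z \<omega>) (Bk j)))) \<partial>M)
       = (\<Prod>j\<in>insert 0 S. \<integral>\<^sup>+\<omega>. ennreal (\<Phi> j (restrict (\<lambda>z. X z \<omega>) (Bk j))) \<partial>M)"
    by (rule root_prod) (use assms m nn in \<open>auto simp: \<Phi>_def\<close>)
  moreover have "(\<Prod>j\<in>insert 0 S. ennreal (\<Phi> j (restrict (\<lambda>z. X z \<omega>) (Bk j))))
     = ennreal (g (N [] \<omega>)) * (\<Prod>j\<in>S. ennreal (h j (Y [j] \<omega>)))" for \<omega>
    using assms(1,2) by (simp add: e0 ej)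
  moreover have "(\<Prod>j\<in>insert 0 S. \<integral>\<^sup>+\<omega>. ennreal (\<Phi> j (restrict (\<lambda>z. X z \<omega>) (Bk j))) \<partial>M)
     = (\<integral>\<^sup>+\<omega>. ennreal (g (N [] \<omega>)) \<partial>M) * (\<Prod>j\<in>S. \<integral>\<^sup>+\<omega>. ennreal (h j (Y [j] \<omega>)) \<partial>M)"
    using assms(1,2) by (simp add: e0 ej cong: prod.cong)
  ultimately show ?thesis by simp
qed

lemma subtree_eq:
  assumes "in_tree N \<omega> u" "1 \<le> j" "j \<le> N u \<omega>"
  shows "subtree N R u j \<omega> = Hs j (Y u \<omega>)"
proof
  fix w
  show "subtree N R u j \<omega> w = Hs j (Y u \<omega>) w"
  proof (cases "w \<noteq> [] \<and> hd w = j")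
    case True
    then obtain w' where w: "w = j # w'" by (cases w) auto
    define Q where "Q k \<longleftrightarrow> 1 \<le> w!k \<and> w!k \<le> N (u @ take k w) \<omega>" for k
    have Q0: "Q 0" using assms w by (simp add: Q_def)
    have "(\<forall>k<length w. Q k) \<longleftrightarrow> (\<forall>k\<in>{1..<length w}. Q k)"
    proof
      assume "\<forall>k\<in>{1..<length w}. Q k"
      then show "\<forall>k<length w. Q k" using Q0
        by (metis atLeastLessThan_iff less_one linorder_not_le)
    qed auto
    then have "in_tree N \<omega> (u @ w) \<longleftrightarrow> (\<forall>k\<in>{1..<length w}. 1 \<le> w!k \<and> w!k \<le> N (u @ take k w) \<omega>)"
      unfolding in_tree_append Q_def using assms(1) by simp
    then show ?thesis using True unfolding subtree_def Hs_def by (simp add: Y_def X_def)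
  qed (auto simp: subtree_def Hs_def)
qed

end



lemma ennreal_of_bool_mult[simp]: "ennreal (of_bool A) * ennreal (of_bool B) = ennreal (of_bool (A \<and> B))"
  by auto

context gwP begin

definition G :: "nat \<Rightarrow> 'a \<Rightarrow> bool" where "G j \<omega> \<longleftrightarrow> P (Hs j (Y [] \<omega>))"

lemma G_meas[measurable]: "Measurable.pred M (G j)"
  unfolding G_def using measurable_compose[OF Y_meas P_Hs_meas] .

lemma in_tree_single: "in_tree N \<omega> [j] \<longleftrightarrow> 1 \<le> j \<and> j \<le> N [] \<omega>"
  using in_tree_snoc[of N \<omega> "[]" j] by (simp add: in_tree_def)

lemma N_root: "fst (Y [] \<omega> []) = N [] \<omega>"
  by (simp add: Y_def X_def)

lemma hyp_conv:
  assumes j: "1 \<le> j" and pos: "measure M {\<omega> \<in> space M. in_tree N \<omega> [j]} > 0"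
    and cp: "cond_prob M (\<lambda>\<omega>. \<not> P (subtree N R [] j \<omega>)) (\<lambda>\<omega>. in_tree N \<omega> [j]) \<le> b"
  shows "measure M {\<omega> \<in> space M. \<not> G j \<omega>} \<le> b"
proof -
  have s1: "{\<omega> \<in> space M. in_tree N \<omega> [j]} = {\<omega> \<in> space M. j \<le> N [] \<omega>}"
    using j by (auto simp: in_tree_single)
  have s2: "{\<omega> \<in> space M. \<not> P (subtree N R [] j \<omega>) \<and> in_tree N \<omega> [j]} = {\<omega> \<in> space M. j \<le> N [] \<omega> \<and> \<not> G j \<omega>}"
  proof -
    have "\<not> P (subtree N R [] j \<omega>) \<longleftrightarrow> \<not> G j \<omega>" if "j \<le> N [] \<omega>" for \<omega>
      using subtree_eq[of \<omega> "[]" j] that j by (simp add: G_def in_tree_def)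
    then show ?thesis using j by (auto simp: in_tree_single)
  qed
  have "(\<integral>\<^sup>+\<omega>. ennreal (of_bool (j \<le> N [] \<omega>)) * (\<Prod>j'\<in>{j}. ennreal (of_bool (\<not> P (Hs j' (Y [] \<omega>))))) \<partial>M)
     = (\<integral>\<^sup>+\<omega>. ennreal (of_bool (j \<le> N [] \<omega>)) \<partial>M) * (\<Prod>j'\<in>{j}. \<integral>\<^sup>+\<omega>. ennreal (of_bool (\<not> P (Hs j' (Y [] \<omega>)))) \<partial>M)"
    by (rule root_prod_Hs) (use j in auto)
  then have "(\<integral>\<^sup>+\<omega>. ennreal (of_bool (j \<le> N [] \<omega> \<and> \<not> G j \<omega>)) \<partial>M)
     = (\<integral>\<^sup>+\<omega>. ennreal (of_bool (j \<le> N [] \<omega>)) \<partial>M) * (\<integral>\<^sup>+\<omega>. ennreal (of_bool (\<not> G j \<omega>)) \<partial>M)"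
    by (simp add: G_def)
  then have "emeasure M {\<omega> \<in> space M. j \<le> N [] \<omega> \<and> \<not> G j \<omega>}
      = emeasure M {\<omega> \<in> space M. j \<le> N [] \<omega>} * emeasure M {\<omega> \<in> space M. \<not> G j \<omega>}"
    by (simp add: nn_integral_of_bool)
  then have eq: "measure M {\<omega> \<in> space M. j \<le> N [] \<omega> \<and> \<not> G j \<omega>}
      = measure M {\<omega> \<in> space M. j \<le> N [] \<omega>} * measure M {\<omega> \<in> space M. \<not> G j \<omega>}"
    by (simp add: emeasure_eq_measure ennreal_mult'[symmetric])
  have "cond_prob M (\<lambda>\<omega>. \<not> P (subtree N R [] j \<omega>)) (\<lambda>\<omega>. in_tree N \<omega> [j])
      = measure M {\<omega> \<in> space M. \<not> G j \<omega>}"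
    unfolding cond_prob_def s1 s2 eq using pos s1 by simp
  then show ?thesis using cp by simp
qed

end



lemma suminf_indicator_range: "(\<Sum>i. ennreal (of_bool (1 \<le> i \<and> i \<le> m))) = of_nat m"
proof -
  have "(\<Sum>i. ennreal (of_bool (1 \<le> i \<and> i \<le> m))) = (\<Sum>i\<in>{1..m}. ennreal (of_bool (1 \<le> i \<and> i \<le> m)))"
    by (rule suminf_finite) auto
  also have "\<dots> = (\<Sum>i\<in>{1..m}. 1)" by (rule sum.cong) auto
  finally show ?thesis by simp
qed

context gwP begin

lemma int_N_root: "(\<integral>\<^sup>+\<omega>. of_nat (N [] \<omega>) \<partial>M) = (\<Sum>m. ennreal (real m * pmf p m))"
  using nn_integral_N[of "\<lambda>m. of_nat m" "[]"]
  by (simp add: ennreal_mult' mult.commute ennreal_of_nat_eq_real_of_nat)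

lemma sum_c0:
  assumes "summable (\<lambda>n. real n * pmf p n)"
  shows "(\<Sum>i. \<integral>\<^sup>+\<omega>. Psi0 i (Y [] \<omega>) \<partial>M) = ennreal (\<Sum>n. real n * pmf p n)"
proof -
  have "(\<Sum>i. \<integral>\<^sup>+\<omega>. Psi0 i (Y [] \<omega>) \<partial>M) = (\<integral>\<^sup>+\<omega>. (\<Sum>i. ennreal (Psi0 i (Y [] \<omega>))) \<partial>M)"
    by (rule nn_integral_suminf[symmetric]) simp
  also have "\<dots> = (\<integral>\<^sup>+\<omega>. of_nat (N [] \<omega>) \<partial>M)"
    by (rule nn_integral_cong) (simp add: Psi0_def N_root suminf_indicator_range[symmetric] of_bool_def)
  also have "\<dots> = ennreal (\<Sum>n. real n * pmf p n)"
    unfolding int_N_root by (rule suminf_ennreal2) (use assms in auto)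
  finally show ?thesis .
qed

end



context gwP begin

definition Tm :: "nat \<Rightarrow> 'a \<Rightarrow> ennreal" where
  "Tm m \<omega> = (\<Sum>i\<in>{1..m}. \<Prod>j\<in>{1..m}-{i}. ennreal (of_bool (\<not> G j \<omega>)))"

lemma Tm_meas[measurable]: "Tm m \<in> borel_measurable M"
  unfolding Tm_def by measurable

lemma pointwise_c:
  "(\<Sum>i. ennreal (Psi i (Y [] \<omega>))) \<le> ennreal lam * of_nat (N [] \<omega>) + (\<Sum>m. ennreal (of_bool (N [] \<omega> = m)) * Tm m \<omega>)"
proof -
  define m0 where "m0 = N [] \<omega>"
  have A: "(\<Sum>i. ennreal (Psi i (Y [] \<omega>))) = (\<Sum>i\<in>{1..m0}. ennreal (Psi i (Y [] \<omega>)))"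
    by (rule suminf_finite) (auto simp: Psi_def N_root m0_def)
  have B: "(\<Sum>m. ennreal (of_bool (N [] \<omega> = m)) * Tm m \<omega>) = Tm m0 \<omega>"
  proof -
    have "(\<Sum>m. ennreal (of_bool (N [] \<omega> = m)) * Tm m \<omega>) = (\<Sum>m\<in>{m0}. ennreal (of_bool (N [] \<omega> = m)) * Tm m \<omega>)"
      by (rule suminf_finite) (auto simp: m0_def)
    then show ?thesis by (simp add: m0_def)
  qed
  have C: "ennreal (Psi i (Y [] \<omega>)) \<le> ennreal lam + (\<Prod>j\<in>{1..m0}-{i}. ennreal (of_bool (\<not> G j \<omega>)))"
    if i: "i \<in> {1..m0}" for i
  proof (cases "\<exists>j. j \<noteq> i \<and> 1 \<le> j \<and> j \<le> m0 \<and> G j \<omega>")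
    case True
    then have "Psi i (Y [] \<omega>) = lam" using i by (simp add: Psi_def N_root m0_def G_def)
    then show ?thesis by (simp add: add_increasing2)
  next
    case False
    then have "Psi i (Y [] \<omega>) = 1" using i unfolding Psi_def N_root m0_def G_def by auto
    moreover have "(\<Prod>j\<in>{1..m0}-{i}. ennreal (of_bool (\<not> G j \<omega>))) = 1"
      by (rule prod.neutral) (use False in auto)
    ultimately show ?thesis by simp
  qed
  have "(\<Sum>i\<in>{1..m0}. ennreal (Psi i (Y [] \<omega>))) \<le> (\<Sum>i\<in>{1..m0}. ennreal lam + (\<Prod>j\<in>{1..m0}-{i}. ennreal (of_bool (\<not> G j \<omega>))))"
    by (rule sum_mono) (rule C)
  also have "\<dots> = ennreal lam * of_nat m0 + Tm m0 \<omega>"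
    by (simp add: sum.distrib Tm_def mult.commute)
  finally show ?thesis unfolding A B m0_def .
qed

lemma term_bound:
  assumes b: "0 \<le> b"
    and hypG: "\<And>j. 1 \<le> j \<Longrightarrow> measure M {\<omega> \<in> space M. j \<le> N [] \<omega>} > 0 \<Longrightarrow> measure M {\<omega> \<in> space M. \<not> G j \<omega>} \<le> b"
  shows "(\<integral>\<^sup>+\<omega>. ennreal (of_bool (N [] \<omega> = m)) * Tm m \<omega> \<partial>M) \<le> ennreal (real m * pmf p m * b ^ (m - 1))"
proof -
  have eqi: "(\<integral>\<^sup>+\<omega>. ennreal (of_bool (N [] \<omega> = m)) * (\<Prod>j\<in>{1..m}-{i}. ennreal (of_bool (\<not> G j \<omega>))) \<partial>M)
      = ennreal (pmf p m * (\<Prod>j\<in>{1..m}-{i}. measure M {\<omega> \<in> space M. \<not> G j \<omega>}))" for i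
  proof -
    have "(\<integral>\<^sup>+\<omega>. ennreal (of_bool (N [] \<omega> = m)) * (\<Prod>j\<in>{1..m}-{i}. ennreal (of_bool (\<not> P (Hs j (Y [] \<omega>))))) \<partial>M)
      = (\<integral>\<^sup>+\<omega>. ennreal (of_bool (N [] \<omega> = m)) \<partial>M) * (\<Prod>j\<in>{1..m}-{i}. \<integral>\<^sup>+\<omega>. ennreal (of_bool (\<not> P (Hs j (Y [] \<omega>)))) \<partial>M)"
      by (rule root_prod_Hs) auto
    also have "\<dots> = ennreal (pmf p m) * (\<Prod>j\<in>{1..m}-{i}. ennreal (measure M {\<omega> \<in> space M. \<not> G j \<omega>}))"
      using prob_N_eq[of "[]" m] by (simp add: nn_integral_of_bool G_def[symmetric] emeasure_eq_measure)
    also have "\<dots> = ennreal (pmf p m * (\<Prod>j\<in>{1..m}-{i}. measure M {\<omega> \<in> space M. \<not> G j \<omega>}))"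
      by (simp add: prod_ennreal ennreal_mult')
    finally show ?thesis by (simp add: G_def)
  qed
  have bnd: "pmf p m * (\<Prod>j\<in>{1..m}-{i}. measure M {\<omega> \<in> space M. \<not> G j \<omega>}) \<le> pmf p m * b ^ (m - 1)"
    if i: "i \<in> {1..m}" for i
  proof (cases "pmf p m = 0")
    case True then show ?thesis by simp
  next
    case False
    then have pm: "pmf p m > 0" by (simp add: pmf_nonneg order_less_le)
    have "measure M {\<omega> \<in> space M. \<not> G j \<omega>} \<le> b" if j: "j \<in> {1..m}-{i}" for j
    proof (rule hypG)
      show "1 \<le> j" using j by auto
      have "measure M {\<omega> \<in> space M. N [] \<omega> = m} \<le> measure M {\<omega> \<in> space M. j \<le> N [] \<omega>}"
        by (rule finite_measure_mono) (use j in auto)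
      moreover have "measure M {\<omega> \<in> space M. N [] \<omega> = m} = pmf p m"
        using prob_N_eq[of "[]" m] by (simp add: emeasure_eq_measure)
      ultimately show "measure M {\<omega> \<in> space M. j \<le> N [] \<omega>} > 0" using pm by simp
    qed
    then have "(\<Prod>j\<in>{1..m}-{i}. measure M {\<omega> \<in> space M. \<not> G j \<omega>}) \<le> (\<Prod>j\<in>{1..m}-{i}. b)"
      by (intro prod_mono) auto
    also have "\<dots> = b ^ (m - 1)" using i by simp
    finally show ?thesis by (intro mult_left_mono) auto
  qed
  have "(\<integral>\<^sup>+\<omega>. ennreal (of_bool (N [] \<omega> = m)) * Tm m \<omega> \<partial>M)
     = (\<Sum>i\<in>{1..m}. \<integral>\<^sup>+\<omega>. ennreal (of_bool (N [] \<omega> = m)) * (\<Prod>j\<in>{1..m}-{i}. ennreal (of_bool (\<not> G j \<omega>))) \<partial>M)"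
    unfolding Tm_def sum_distrib_left by (rule nn_integral_sum) simp
  also have "\<dots> = (\<Sum>i\<in>{1..m}. ennreal (pmf p m * (\<Prod>j\<in>{1..m}-{i}. measure M {\<omega> \<in> space M. \<not> G j \<omega>})))"
    by (rule sum.cong[OF refl eqi])
  also have "\<dots> \<le> (\<Sum>i\<in>{1..m}. ennreal (pmf p m * b ^ (m - 1)))"
    by (intro sum_mono ennreal_leI bnd)
  also have "\<dots> = ennreal (real m * pmf p m * b ^ (m - 1))"
    by (simp add: ennreal_of_nat_eq_real_of_nat ennreal_mult'[symmetric] mult.assoc)
  finally show ?thesis .
qed

end



context gwP begin

lemma sum_c:
  assumes sm: "summable (\<lambda>n. real n * pmf p n)" and b: "0 \<le> b"
    and hypG: "\<And>j. 1 \<le> j \<Longrightarrow> measure M {\<omega> \<in> space M. j \<le> N [] \<omega>} > 0 \<Longrightarrow> measure M {\<omega> \<in> space M. \<not> G j \<omega>} \<le> b"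
  shows "(\<Sum>i. \<integral>\<^sup>+\<omega>. Psi i (Y [] \<omega>) \<partial>M) \<le> ennreal lam * ennreal (\<Sum>n. real n * pmf p n) + (\<Sum>m. ennreal (real m * pmf p m * b ^ (m - 1)))"
proof -
  have "(\<Sum>i. \<integral>\<^sup>+\<omega>. Psi i (Y [] \<omega>) \<partial>M) = (\<integral>\<^sup>+\<omega>. (\<Sum>i. ennreal (Psi i (Y [] \<omega>))) \<partial>M)"
    by (rule nn_integral_suminf[symmetric]) simp
  also have "\<dots> \<le> (\<integral>\<^sup>+\<omega>. ennreal lam * of_nat (N [] \<omega>) + (\<Sum>m. ennreal (of_bool (N [] \<omega> = m)) * Tm m \<omega>) \<partial>M)"
    by (rule nn_integral_mono) (rule pointwise_c)
  also have "\<dots> = ennreal lam * (\<integral>\<^sup>+\<omega>. of_nat (N [] \<omega>) \<partial>M) + (\<Sum>m. \<integral>\<^sup>+\<omega>. ennreal (of_bool (N [] \<omega> = m)) * Tm m \<omega> \<partial>M)"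
    by (simp add: nn_integral_add nn_integral_cmult nn_integral_suminf)
  also have "\<dots> \<le> ennreal lam * ennreal (\<Sum>n. real n * pmf p n) + (\<Sum>m. ennreal (real m * pmf p m * b ^ (m - 1)))"
  proof (rule add_mono)
    have "(\<integral>\<^sup>+\<omega>. of_nat (N [] \<omega>) \<partial>M) = ennreal (\<Sum>n. real n * pmf p n)"
      unfolding int_N_root by (rule suminf_ennreal2) (use sm in auto)
    then show "ennreal lam * (\<integral>\<^sup>+\<omega>. of_nat (N [] \<omega>) \<partial>M) \<le> ennreal lam * ennreal (\<Sum>n. real n * pmf p n)" by simp
    show "(\<Sum>m. \<integral>\<^sup>+\<omega>. ennreal (of_bool (N [] \<omega> = m)) * Tm m \<omega> \<partial>M) \<le> (\<Sum>m. ennreal (real m * pmf p m * b ^ (m - 1)))"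
    proof (rule suminf_le)
      fix m show "(\<integral>\<^sup>+\<omega>. ennreal (of_bool (N [] \<omega> = m)) * Tm m \<omega> \<partial>M) \<le> ennreal (real m * pmf p m * b ^ (m - 1))"
        by (rule term_bound[OF b hypG])
    qed (simp_all add: summableI)
  qed
  finally show ?thesis .
qed

end



lemma gen_deriv:
  fixes p :: "nat pmf"
  assumes sm: "summable (\<lambda>n. real n * pmf p n)" and b: "0 \<le> b" "b < 1"
  shows "summable (\<lambda>m. real m * pmf p m * b ^ (m - 1))"
    and "deriv (gen_fun p) b = (\<Sum>m. real m * pmf p m * b ^ (m - 1))"
proof -
  have spmf: "summable (\<lambda>n. pmf p n)"
  proof (rule summable_comparison_test'[OF sm, of 1])
    fix n :: nat assume "1 \<le> n"
    then show "norm (pmf p n) \<le> real n * pmf p n"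
      by (simp add: pmf_nonneg mult_le_cancel_right1)
  qed
  have sx: "summable (\<lambda>n. pmf p n * x ^ n)" if "norm x < 1" for x :: real
  proof (rule summable_comparison_test'[OF spmf, of 0])
    fix n :: nat
    have "\<bar>x\<bar> ^ n \<le> 1" using that by (simp add: power_le_one)
    then show "norm (pmf p n * x ^ n) \<le> pmf p n"
      by (simp add: abs_mult power_abs pmf_nonneg mult_left_le)
  qed
  have s1: "summable (\<lambda>n. pmf p n * 1 ^ n)" using spmf by simp
  have D: "DERIV (\<lambda>x. \<Sum>n. pmf p n * x ^ n) b :> (\<Sum>n. diffs (pmf p) n * b ^ n)"
    by (rule termdiffs_strong[OF s1]) (use b in simp)
  have sd: "summable (\<lambda>n. diffs (pmf p) n * b ^ n)"
    by (rule termdiff_converges[where K=1]) (use b sx in auto)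
  have shift: "(\<lambda>n. real (Suc n) * pmf p (Suc n) * b ^ (Suc n - 1)) = (\<lambda>n. diffs (pmf p) n * b ^ n)"
    by (simp add: diffs_def fun_eq_iff)
  show s: "summable (\<lambda>m. real m * pmf p m * b ^ (m - 1))"
    using sd unfolding shift[symmetric] by (subst summable_Suc_iff[symmetric])
  have "(\<Sum>m. real m * pmf p m * b ^ (m - 1)) = (\<Sum>n. real (Suc n) * pmf p (Suc n) * b ^ (Suc n - 1))"
    using suminf_split_head[OF s] by simp
  also have "\<dots> = (\<Sum>n. diffs (pmf p) n * b ^ n)" unfolding shift ..
  finally have e: "(\<Sum>m. real m * pmf p m * b ^ (m - 1)) = (\<Sum>n. diffs (pmf p) n * b ^ n)" .
  have "gen_fun p = (\<lambda>x. \<Sum>n. pmf p n * x ^ n)" by (simp add: gen_fun_def[abs_def])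
  then show "deriv (gen_fun p) b = (\<Sum>m. real m * pmf p m * b ^ (m - 1))"
    using DERIV_imp_deriv[OF D] e by simp
qed




lemma Ssum_cong: "(\<And>v. length v = n \<Longrightarrow> f v = g v) \<Longrightarrow> Ssum n f = Ssum n g"
proof (induction n arbitrary: f g)
  case 0 then show ?case by simp
next
  case (Suc n)
  have "Ssum n (\<lambda>w. f (i # w)) = Ssum n (\<lambda>w. g (i # w))" for i
    by (rule Suc.IH) (simp add: Suc.prems)
  then show ?case by simp
qed

lemma prod_if_const:
  assumes "finite A"
  shows "(\<Prod>k\<in>A. if C k then (l::real) else 1) = l ^ card {k\<in>A. C k}"
  using assms
proof (induction A rule: finite_induct)
  case empty then show ?case by simp
next
  case (insert x A)
  have "{k \<in> insert x A. C k} = (if C x then insert x {k\<in>A. C k} else {k\<in>A. C k})" by auto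
  then show ?case using insert by (auto simp: card_insert_if)
qed

context gwP begin

definition fn :: "nat \<Rightarrow> 'a \<Rightarrow> ennreal" where
  "fn n \<omega> = Ssum n (\<lambda>v. ennreal (\<Prod>k<n. F v k \<omega>))"

lemma fn_meas[measurable]: "fn n \<in> borel_measurable M"
  unfolding fn_def by (rule Ssum_meas) simp

lemma fn_int:
  assumes "1 \<le> n"
  shows "(\<integral>\<^sup>+\<omega>. fn n \<omega> \<partial>M) = (\<Sum>i. \<integral>\<^sup>+\<omega>. Psi0 i (Y [] \<omega>) \<partial>M) * (\<Sum>i. \<integral>\<^sup>+\<omega>. Psi i (Y [] \<omega>) \<partial>M) ^ (n - 1)"
proof -
  define gg where "gg (k::nat) (i::nat) = (if k = 0 then \<integral>\<^sup>+\<omega>. Psi0 i (Y [] \<omega>) \<partial>M else \<integral>\<^sup>+\<omega>. Psi i (Y [] \<omega>) \<partial>M)" for k i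
  have "(\<integral>\<^sup>+\<omega>. fn n \<omega> \<partial>M) = Ssum n (\<lambda>v. \<integral>\<^sup>+\<omega>. ennreal (\<Prod>k<n. F v k \<omega>) \<partial>M)"
    unfolding fn_def by (rule Ssum_int) simp
  also have "\<dots> = Ssum n (\<lambda>v. \<Prod>k<n. gg k (v!k))"
  proof (rule Ssum_cong)
    fix v :: "nat list" assume v: "length v = n"
    have "(\<integral>\<^sup>+\<omega>. ennreal (\<Prod>k<n. F v k \<omega>) \<partial>M) = (\<Prod>k<n. \<integral>\<^sup>+\<omega>. F v k \<omega> \<partial>M)"
      using F_prod[of v] v by simp
    also have "\<dots> = (\<Prod>k<n. gg k (v!k))"
      by (rule prod.cong) (auto simp: gg_def F_int0 F_int)
    finally show "(\<integral>\<^sup>+\<omega>. ennreal (\<Prod>k<n. F v k \<omega>) \<partial>M) = (\<Prod>k<n. gg k (v!k))" .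
  qed
  also have "\<dots> = (\<Prod>k<n. (\<Sum>i. gg k i))" by (rule Ssum_prod)
  also have "\<dots> = (\<Sum>i. \<integral>\<^sup>+\<omega>. Psi0 i (Y [] \<omega>) \<partial>M) * (\<Sum>i. \<integral>\<^sup>+\<omega>. Psi i (Y [] \<omega>) \<partial>M) ^ (n - 1)"
  proof -
    obtain n' where n: "n = Suc n'" using assms by (cases n) auto
    show ?thesis unfolding n by (simp del: prod.lessThan_Suc add: prod.lessThan_Suc_shift gg_def)
  qed
  finally show ?thesis .
qed

lemma prod_F:
  assumes v: "v \<in> generation N \<omega> n" and n: "1 \<le> n"
  shows "(\<Prod>k<n. F v k \<omega>) = lam ^ Gamma N R P \<omega> v"
proof -
  have len: "length v = n" and it: "in_tree N \<omega> v" using v by (auto simp: generation_def)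
  define C where "C k \<longleftrightarrow> (\<exists>j. j \<noteq> v!k \<and> 1 \<le> j \<and> j \<le> N (take k v) \<omega> \<and> P (Hs j (Y (take k v) \<omega>)))" for k
  have Nt: "fst (Y u \<omega> []) = N u \<omega>" for u by (simp add: Y_def X_def)
  have F0: "F v 0 \<omega> = 1"
    using in_tree_take_nth[OF it, of 0] len n by (simp add: F_def Psi0_def Nt)
  have Fk: "F v k \<omega> = (if C k then lam else 1)" if "k \<in> {1..<n}" for k
    using in_tree_take_nth[OF it, of k] len that by (simp add: F_def Psi_def Nt C_def)
  have "{..<n} = insert 0 {1..<n}" using n by auto
  then have "(\<Prod>k<n. F v k \<omega>) = (\<Prod>k\<in>{1..<n}. F v k \<omega>)"
    by (simp add: F0)
  also have "\<dots> = (\<Prod>k\<in>{1..<n}. if C k then lam else 1)"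
    by (rule prod.cong[OF refl Fk])
  also have "\<dots> = lam ^ card {k\<in>{1..<n}. C k}" by (rule prod_if_const) simp
  also have "card {k\<in>{1..<n}. C k} = Gamma N R P \<omega> v"
  proof -
    have "{k \<in> {2..length v}. \<exists>j. j \<noteq> v ! (k - 1) \<and> in_tree N \<omega> (take (k - 1) v @ [j])
            \<and> P (subtree N R (take (k - 1) v) j \<omega>)} = Suc ` {k\<in>{1..<n}. C k}"
    proof (intro set_eqI iffI)
      fix k assume k: "k \<in> {k \<in> {2..length v}. \<exists>j. j \<noteq> v ! (k - 1) \<and> in_tree N \<omega> (take (k - 1) v @ [j])
            \<and> P (subtree N R (take (k - 1) v) j \<omega>)}"
      then obtain j where j: "j \<noteq> v ! (k - 1)" "in_tree N \<omega> (take (k - 1) v @ [j])" "P (subtree N R (take (k - 1) v) j \<omega>)"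
        and k2: "k \<in> {2..n}" using len by auto
      have j2: "in_tree N \<omega> (take (k - 1) v)" "1 \<le> j" "j \<le> N (take (k - 1) v) \<omega>" using j(2) by (auto simp: in_tree_snoc)
      have "C (k - 1)" unfolding C_def using j j2 subtree_eq[OF j2] by auto
      moreover have "k - 1 \<in> {1..<n}" using k2 by auto
      moreover have "k = Suc (k - 1)" using k2 by auto
      ultimately show "k \<in> Suc ` {k\<in>{1..<n}. C k}" by blast
    next
      fix k assume "k \<in> Suc ` {k\<in>{1..<n}. C k}"
      then obtain k' where k': "k = Suc k'" "k' \<in> {1..<n}" "C k'" by auto
      then obtain j where j: "j \<noteq> v!k'" "1 \<le> j" "j \<le> N (take k' v) \<omega>" "P (Hs j (Y (take k' v) \<omega>))"
        unfolding C_def by auto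
      have itk: "in_tree N \<omega> (take k' v)" by (rule in_tree_take[OF it])
      have "in_tree N \<omega> (take k' v @ [j])" using itk j by (simp add: in_tree_snoc)
      moreover have "P (subtree N R (take k' v) j \<omega>)" using subtree_eq[OF itk j(2,3)] j(4) by simp
      ultimately show "k \<in> {k \<in> {2..length v}. \<exists>j. j \<noteq> v ! (k - 1) \<and> in_tree N \<omega> (take (k - 1) v @ [j])
            \<and> P (subtree N R (take (k - 1) v) j \<omega>)}"
        using k' j(1) len by auto
    qed
    then show ?thesis unfolding Gamma_def by (simp add: card_image)
  qed
  finally show ?thesis .
qed

lemma fn_ge:
  assumes v: "v \<in> generation N \<omega> n" and n: "1 \<le> n"
  shows "ennreal (lam ^ Gamma N R P \<omega> v) \<le> fn n \<omega>"
proof -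
  have "length v = n" using v by (simp add: generation_def)
  then have "ennreal (\<Prod>k<n. F v k \<omega>) \<le> fn n \<omega>"
    unfolding fn_def by (rule Ssum_ge[where f="\<lambda>v. ennreal (\<Prod>k<n. F v k \<omega>)"])
  then show ?thesis using prod_F[OF v n] by simp
qed

end



lemma prod_of_bool_ennreal: "finite A \<Longrightarrow> (\<Prod>i\<in>A. ennreal (of_bool (Q i))) = ennreal (of_bool (\<forall>i\<in>A. Q i))"
  by (induction A rule: finite_induct) auto

context gwP begin

definition Theta :: "(nat list \<Rightarrow> nat \<times> real) \<Rightarrow> bool" where
  "Theta x \<longleftrightarrow> 2 \<le> fst (x []) \<and> P (Hs 1 x) \<and> P (Hs 2 x)"

lemma Theta_meas[measurable]: "Measurable.pred (PiM I (\<lambda>_. DD)) Theta"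
  unfolding Theta_def by measurable

lemma E_pos:
  assumes b: "b < 1"
    and hypG: "\<And>j. 1 \<le> j \<Longrightarrow> measure M {\<omega> \<in> space M. j \<le> N [] \<omega>} > 0 \<Longrightarrow> measure M {\<omega> \<in> space M. \<not> G j \<omega>} \<le> b"
    and m0: "2 \<le> m0" "pmf p m0 > 0"
  shows "measure M {\<omega> \<in> space M. N [] \<omega> = m0 \<and> (\<forall>i\<in>{1..m0}. Theta (Y [i] \<omega>))} > 0"
proof -
  have pN: "measure M {\<omega> \<in> space M. N [] \<omega> = m0} = pmf p m0"
    using prob_N_eq[of "[]" m0] by (simp add: emeasure_eq_measure)
  have posj: "measure M {\<omega> \<in> space M. j \<le> N [] \<omega>} > 0" if "j \<le> m0" for j
  proof -
    have "measure M {\<omega> \<in> space M. N [] \<omega> = m0} \<le> measure M {\<omega> \<in> space M. j \<le> N [] \<omega>}"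
      by (rule finite_measure_mono) (use that in auto)
    then show ?thesis using pN m0 by simp
  qed
  have pG: "measure M {\<omega> \<in> space M. G j \<omega>} > 0" if "1 \<le> j" "j \<le> m0" for j
  proof -
    have "measure M {\<omega> \<in> space M. \<not> G j \<omega>} \<le> b" using hypG[OF that(1) posj[OF that(2)]] .
    moreover have "measure M {\<omega> \<in> space M. \<not> G j \<omega>} = 1 - measure M {\<omega> \<in> space M. G j \<omega>}"
      by (rule prob_neg) simp
    ultimately show ?thesis using b by simp
  qed
  define \<theta> where "\<theta> = measure M {\<omega> \<in> space M. 2 \<le> N [] \<omega>} * (measure M {\<omega> \<in> space M. G 1 \<omega>} * measure M {\<omega> \<in> space M. G 2 \<omega>})"
  have \<theta>pos: "\<theta> > 0" unfolding \<theta>_def using posj[of 2] pG[of 1] pG[of 2] m0 by simp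
  have eT: "(\<integral>\<^sup>+\<omega>. ennreal (of_bool (Theta (Y [] \<omega>))) \<partial>M) = ennreal \<theta>"
  proof -
    have "(\<integral>\<^sup>+\<omega>. ennreal (of_bool (2 \<le> N [] \<omega>)) * (\<Prod>j\<in>{1,2}. ennreal (of_bool (P (Hs j (Y [] \<omega>))))) \<partial>M)
      = (\<integral>\<^sup>+\<omega>. ennreal (of_bool (2 \<le> N [] \<omega>)) \<partial>M) * (\<Prod>j\<in>{1,2}. \<integral>\<^sup>+\<omega>. ennreal (of_bool (P (Hs j (Y [] \<omega>)))) \<partial>M)"
      by (rule root_prod_Hs) auto
    then have "(\<integral>\<^sup>+\<omega>. ennreal (of_bool (Theta (Y [] \<omega>))) \<partial>M)
      = (\<integral>\<^sup>+\<omega>. ennreal (of_bool (2 \<le> N [] \<omega>)) \<partial>M) * ((\<integral>\<^sup>+\<omega>. ennreal (of_bool (G 1 \<omega>)) \<partial>M) * (\<integral>\<^sup>+\<omega>. ennreal (of_bool (G 2 \<omega>)) \<partial>M))"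
      by (simp add: Theta_def G_def N_root conj_commute)
    then show ?thesis
      by (simp add: nn_integral_of_bool emeasure_eq_measure \<theta>_def ennreal_mult'[symmetric])
  qed
  have "(\<integral>\<^sup>+\<omega>. ennreal (of_bool (N [] \<omega> = m0)) * (\<Prod>i\<in>{1..m0}. ennreal (of_bool (Theta (Y [i] \<omega>)))) \<partial>M)
    = (\<integral>\<^sup>+\<omega>. ennreal (of_bool (N [] \<omega> = m0)) \<partial>M) * (\<Prod>i\<in>{1..m0}. \<integral>\<^sup>+\<omega>. ennreal (of_bool (Theta (Y [i] \<omega>))) \<partial>M)"
    by (rule root_prod_Y) auto
  also have "\<dots> = ennreal (pmf p m0) * (\<Prod>i\<in>{1..m0}. ennreal \<theta>)"
  proof -
    have "(\<integral>\<^sup>+\<omega>. ennreal (of_bool (Theta (Y [i] \<omega>))) \<partial>M) = ennreal \<theta>" for i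
      using nn_integral_Y[of "\<lambda>x. ennreal (of_bool (Theta x))" "[i]"] eT by simp
    then show ?thesis using pN by (simp add: nn_integral_of_bool emeasure_eq_measure)
  qed
  also have "\<dots> = ennreal (pmf p m0 * \<theta> ^ m0)"
    using \<theta>pos by (simp add: prod_ennreal ennreal_mult' ennreal_power)
  finally have "emeasure M {\<omega> \<in> space M. N [] \<omega> = m0 \<and> (\<forall>i\<in>{1..m0}. Theta (Y [i] \<omega>))} = ennreal (pmf p m0 * \<theta> ^ m0)"
    by (simp add: prod_of_bool_ennreal nn_integral_of_bool)
  then have "measure M {\<omega> \<in> space M. N [] \<omega> = m0 \<and> (\<forall>i\<in>{1..m0}. Theta (Y [i] \<omega>))} = pmf p m0 * \<theta> ^ m0"
    using \<theta>pos m0 by (simp add: emeasure_eq_measure)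
  then show ?thesis using \<theta>pos m0 by simp
qed

end



context gwP begin

lemma E_Gamma:
  assumes n: "2 \<le> n" and E: "N [] \<omega> = m0" "\<forall>i\<in>{1..m0}. Theta (Y [i] \<omega>)"
    and v: "v \<in> generation N \<omega> n"
  shows "1 \<le> Gamma N R P \<omega> v"
proof -
  have len: "length v = n" and it: "in_tree N \<omega> v" using v by (auto simp: generation_def)
  define i where "i = v!0"
  have i: "1 \<le> i" "i \<le> m0" using in_tree_take_nth[OF it, of 0] len n E by (auto simp: i_def)
  have th: "Theta (Y [i] \<omega>)" using E i by auto
  have t1: "take 1 v = [i]" using len n unfolding i_def by (cases v) auto
  have it1: "in_tree N \<omega> [i]" using in_tree_take[OF it, of 1] t1 by simp
  define j where "j = (if v!1 = 1 then 2 else (1::nat))"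
  have j: "j \<noteq> v!1" "1 \<le> j" "j \<le> N [i] \<omega>" "P (Hs j (Y [i] \<omega>))"
    using th unfolding j_def Theta_def by (auto simp: Y_def X_def)
  have "in_tree N \<omega> ([i] @ [j])" using it1 j in_tree_snoc[of N \<omega> "[i]" j] by blast
  moreover have "P (subtree N R [i] j \<omega>)" using subtree_eq[OF it1 j(2,3)] j(4) by simp
  ultimately have mem: "2 \<in> {k \<in> {2..length v}. \<exists>j. j \<noteq> v ! (k - 1) \<and> in_tree N \<omega> (take (k - 1) v @ [j])
       \<and> P (subtree N R (take (k - 1) v) j \<omega>)}"
  proof -
    assume a: "in_tree N \<omega> ([i] @ [j])" "P (subtree N R [i] j \<omega>)"
    have "2 \<in> {2..length v}" using len n by simp
    moreover have "\<exists>j. j \<noteq> v ! (2 - 1) \<and> in_tree N \<omega> (take (2 - 1) v @ [j]) \<and> P (subtree N R (take (2 - 1) v) j \<omega>)"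
      using a j(1) t1 by (intro exI[of _ j]) simp
    ultimately show ?thesis by blast
  qed
  have fin: "finite {k \<in> {2..length v}. \<exists>j. j \<noteq> v ! (k - 1) \<and> in_tree N \<omega> (take (k - 1) v @ [j])
       \<and> P (subtree N R (take (k - 1) v) j \<omega>)}" by simp
  have "0 < Gamma N R P \<omega> v" unfolding Gamma_def using card_gt_0_iff fin mem by blast
  then show ?thesis by simp
qed

end



theorem lemma1:
  fixes M :: "'a measure"
    and N :: "nat list \<Rightarrow> 'a \<Rightarrow> nat"
    and R :: "nat list \<Rightarrow> 'a \<Rightarrow> real"
    and p :: "nat pmf"
    and Fd :: "real measure"
    and P :: "(nat list \<Rightarrow> bool \<times> real) \<Rightarrow> bool"
    and \<epsilon>0 :: real
  assumes M: "prob_space M"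
    and N_meas: "\<And>v. N v \<in> measurable M (count_space UNIV)"
    and R_meas: "\<And>v. R v \<in> borel_measurable M"
    and Fd_prob: "prob_space Fd" and Fd_sets: "sets Fd = sets borel"
    and NR_distr: "\<And>v. distr M (count_space UNIV \<Otimes>\<^sub>M borel) (\<lambda>\<omega>. (N v \<omega>, R v \<omega>))
                     = measure_pmf p \<Otimes>\<^sub>M Fd"
    and Fd_nonneg: "AE x in Fd. 0 \<le> x"
    and indep: "prob_space.indep_vars M (\<lambda>_. count_space UNIV \<Otimes>\<^sub>M borel)
                  (\<lambda>v \<omega>. (N v \<omega>, R v \<omega>)) UNIV"
    and mean_fin: "summable (\<lambda>n. real n * pmf p n)"
    and mean_gt1: "(\<Sum>n. real n * pmf p n) > 1"
    and q_lt1: "extinction_prob M N < 1"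
    and eps_pos: "\<epsilon>0 > 0"
    and eps1: "0 < extinction_prob M N + 2 * \<epsilon>0"
    and eps2: "extinction_prob M N + 2 * \<epsilon>0 < 1"
    and eps3: "deriv (gen_fun p) (extinction_prob M N + 2 * \<epsilon>0) + 2 * \<epsilon>0 < 1"
    and P_meas: "Measurable.pred tree_space P"
    and hyp: "\<And>j. 1 \<le> j \<Longrightarrow> measure M {\<omega> \<in> space M. in_tree N \<omega> [j]} > 0 \<Longrightarrow>
               cond_prob M (\<lambda>\<omega>. \<not> P (subtree N R [] j \<omega>)) (\<lambda>\<omega>. in_tree N \<omega> [j])
                 \<le> extinction_prob M N + 2 * \<epsilon>0"
  shows "(AE \<omega> in M. \<forall>x :: nat \<Rightarrow> nat. (\<forall>n. in_tree N \<omega> (map x [0..<n])) \<longrightarrow>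
            (\<exists>\<^sub>\<infinity>n. \<exists>j. j \<noteq> x n \<and> in_tree N \<omega> (map x [0..<n] @ [j])
                       \<and> P (subtree N R (map x [0..<n]) j \<omega>)))
       \<and> (\<exists>C1 C2 :: real. 0 < C1 \<and> 0 < C2 \<and>
            (\<forall>n \<ge> 2. measure M {\<omega> \<in> space M. generation N \<omega> n \<noteq> {} \<and>
                 real (Min (Gamma N R P \<omega> ` generation N \<omega> n)) \<le> C1 * real n}
               \<le> exp (- C2 * real n)))"
proof -
  interpret prob_space M by (rule M)
  define q where "q = extinction_prob M N"
  define b where "b = q + 2 * \<epsilon>0"
  define \<gamma> where "\<gamma> = (\<Sum>n. real n * pmf p n)"
  define d where "d = deriv (gen_fun p) b"
  have b01: "0 < b" "b < 1" using eps1 eps2 by (simp_all add: b_def q_def)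
  have d_eq: "d = (\<Sum>m. real m * pmf p m * b ^ (m - 1))" and d_sum: "summable (\<lambda>m. real m * pmf p m * b ^ (m - 1))"
    using gen_deriv[OF mean_fin, of b] b01 by (simp_all add: d_def)
  have d_nn: "0 \<le> d" unfolding d_eq by (rule suminf_nonneg[OF d_sum]) (use b01 in \<open>simp add: pmf_nonneg\<close>)
  have d_lt1: "d < 1" using eps3 eps_pos by (simp add: d_def b_def q_def)
  have \<gamma>1: "1 < \<gamma>" using mean_gt1 by (simp add: \<gamma>_def)
  define lam where "lam = (1 - d) / (2 * \<gamma>)"
  have lam01: "0 < lam" "lam < 1" using d_nn d_lt1 \<gamma>1 by (auto simp: lam_def field_simps)
  define a where "a = lam * \<gamma> + d"
  have a_eq: "a = (1 + d) / 2" using \<gamma>1 by (simp add: a_def lam_def field_simps)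
  have a01: "0 < a" "a < 1" using d_nn d_lt1 by (simp_all add: a_eq)
  have lam_nn: "0 \<le> lam" using lam01 by simp
  interpret G: gwP M N R p Fd P lam
    by (intro gwP.intro gw.intro gw_axioms.intro gwP_axioms.intro) (rule M N_meas R_meas Fd_prob Fd_sets NR_distr indep P_meas lam_nn)+
  have hypG: "measure M {\<omega> \<in> space M. \<not> G.G j \<omega>} \<le> b"
    if j: "1 \<le> j" and pos: "measure M {\<omega> \<in> space M. j \<le> N [] \<omega>} > 0" for j
  proof (rule G.hyp_conv[OF j])
    have "{\<omega> \<in> space M. in_tree N \<omega> [j]} = {\<omega> \<in> space M. j \<le> N [] \<omega>}"
      using j by (auto simp: G.in_tree_single)
    then show "measure M {\<omega> \<in> space M. in_tree N \<omega> [j]} > 0" using pos by simp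
    show "cond_prob M (\<lambda>\<omega>. \<not> P (subtree N R [] j \<omega>)) (\<lambda>\<omega>. in_tree N \<omega> [j]) \<le> b"
      using hyp[OF j] pos \<open>{\<omega> \<in> space M. in_tree N \<omega> [j]} = _\<close> by (simp add: b_def q_def)
  qed
  have sc0: "(\<Sum>i. \<integral>\<^sup>+\<omega>. G.Psi0 i (G.Y [] \<omega>) \<partial>M) = ennreal \<gamma>"
    unfolding \<gamma>_def by (rule G.sum_c0[OF mean_fin])
  have sc: "(\<Sum>i. \<integral>\<^sup>+\<omega>. G.Psi i (G.Y [] \<omega>) \<partial>M) \<le> ennreal a"
  proof -
    have tnn: "0 \<le> real m * pmf p m * b ^ (m - 1)" for m
      using b01 by (simp add: pmf_nonneg)
    have "(\<Sum>i. \<integral>\<^sup>+\<omega>. G.Psi i (G.Y [] \<omega>) \<partial>M) \<le> ennreal lam * ennreal \<gamma> + (\<Sum>m. ennreal (real m * pmf p m * b ^ (m - 1)))"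
      unfolding \<gamma>_def by (rule G.sum_c[OF mean_fin]) (use b01 hypG in auto)
    also have "(\<Sum>m. ennreal (real m * pmf p m * b ^ (m - 1))) = ennreal d"
      unfolding d_eq by (rule suminf_ennreal2[OF tnn d_sum])
    finally show ?thesis using lam01 \<gamma>1 d_nn by (simp add: a_def ennreal_mult' ennreal_plus[symmetric])
  qed
  have int_fn: "(\<integral>\<^sup>+\<omega>. G.fn n \<omega> \<partial>M) \<le> ennreal (\<gamma> * a ^ (n - 1))" if n: "1 \<le> n" for n
  proof -
    have "(\<integral>\<^sup>+\<omega>. G.fn n \<omega> \<partial>M) = ennreal \<gamma> * (\<Sum>i. \<integral>\<^sup>+\<omega>. G.Psi i (G.Y [] \<omega>) \<partial>M) ^ (n - 1)"
      using G.fn_int[OF n] sc0 by simp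
    also have "\<dots> \<le> ennreal \<gamma> * ennreal a ^ (n - 1)"
      by (intro mult_left_mono power_mono sc) auto
    finally show ?thesis using a01 \<gamma>1 by (simp add: ennreal_mult' ennreal_power)
  qed
  define \<kappa> where "\<kappa> = - ln a"
  define L where "L = - ln lam"
  have \<kappa>pos: "0 < \<kappa>" using a01 by (simp add: \<kappa>_def)
  have Lpos: "0 < L" using lam01 by (simp add: L_def)
  have "\<exists>m0. 2 \<le> m0 \<and> pmf p m0 > 0"
  proof (rule ccontr)
    assume "\<not> (\<exists>m0. 2 \<le> m0 \<and> pmf p m0 > 0)"
    then have z: "pmf p m = 0" if "2 \<le> m" for m using that by (metis pmf_nonneg order_le_less)
    have "\<gamma> = (\<Sum>m\<in>{1}. real m * pmf p m)"
      unfolding \<gamma>_def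
    proof (rule suminf_finite)
      show "real m * pmf p m = 0" if "m \<notin> {1}" for m
        using that z[of m] by (cases "m = 0") auto
    qed simp
    then have "\<gamma> \<le> 1" by (simp add: pmf_le_1)
    then show False using \<gamma>1 by simp
  qed
  then obtain m0 where m0: "2 \<le> m0" "pmf p m0 > 0" by blast
  define E where "E = {\<omega> \<in> space M. N [] \<omega> = m0 \<and> (\<forall>i\<in>{1..m0}. G.Theta (G.Y [i] \<omega>))}"
  have pE: "measure M E > 0" unfolding E_def by (rule G.E_pos[OF b01(2) hypG m0]) auto
  have E_sets: "E \<in> sets M" unfolding E_def by measurable
  define r where "r = max (1 - measure M E) (1/2)"
  have r: "1/2 \<le> r" "r < 1" using pE by (auto simp: r_def)
  define n0 :: nat where "n0 = max 2 (nat \<lceil>4 * (ln \<gamma> + \<kappa>) / \<kappa>\<rceil>)"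
  have n0a: "2 \<le> n0" unfolding n0_def by simp
  have "4 * (ln \<gamma> + \<kappa>) / \<kappa> \<le> real (nat \<lceil>4 * (ln \<gamma> + \<kappa>) / \<kappa>\<rceil>)" by (rule real_nat_ceiling_ge)
  also have "\<dots> \<le> real n0" unfolding n0_def by simp
  finally have n0: "2 \<le> n0" "4 * (ln \<gamma> + \<kappa>) / \<kappa> \<le> real n0" using n0a by simp_all
  define C1 where "C1 = min (\<kappa> / (2 * L)) (1 / (2 * real n0))"
  define C2 where "C2 = min (\<kappa> / 4) (- ln r / real n0)"
  have C1pos: "0 < C1" using \<kappa>pos Lpos n0 by (simp add: C1_def)
  have lnr: "ln r < 0" using r by simp
  have C2pos: "0 < C2" using \<kappa>pos lnr n0 using divide_neg_pos[OF lnr, of "real n0"] by (simp add: C2_def)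
  define A where "A n = {\<omega> \<in> space M. 1 \<le> ennreal (lam powr (- (C1 * real n))) * G.fn n \<omega>}" for n
  have A_sets: "A n \<in> sets M" for n unfolding A_def by measurable
  define Bn where "Bn n = \<gamma> * exp \<kappa> * exp (- (\<kappa> / 2) * real n)" for n :: nat
  have A_bound: "measure M (A n) \<le> Bn n" if n: "1 \<le> n" for n
  proof -
    have "emeasure M (A n) = (\<integral>\<^sup>+\<omega>. indicator (A n) \<omega> \<partial>M)"
      by (rule nn_integral_indicator[symmetric, OF A_sets])
    also have "\<dots> \<le> (\<integral>\<^sup>+\<omega>. ennreal (lam powr (- (C1 * real n))) * G.fn n \<omega> \<partial>M)"
      by (rule nn_integral_mono) (auto simp: A_def indicator_def)
    also have "\<dots> = ennreal (lam powr (- (C1 * real n))) * (\<integral>\<^sup>+\<omega>. G.fn n \<omega> \<partial>M)"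
      by (rule nn_integral_cmult) simp
    also have "\<dots> \<le> ennreal (lam powr (- (C1 * real n))) * ennreal (\<gamma> * a ^ (n - 1))"
      by (intro mult_left_mono int_fn n) simp
    also have "\<dots> = ennreal (lam powr (- (C1 * real n)) * (\<gamma> * a ^ (n - 1)))"
      using \<gamma>1 a01 by (simp add: ennreal_mult')
    finally have le: "emeasure M (A n) \<le> ennreal (lam powr (- (C1 * real n)) * (\<gamma> * a ^ (n - 1)))" .
    have e1: "lam powr (- (C1 * real n)) = exp (C1 * real n * L)"
      using lam01 by (simp add: powr_def L_def)
    have e2: "a ^ (n - 1) = exp (- (real (n - 1) * \<kappa>))"
    proof -
      have "a ^ (n - 1) = exp (ln a) ^ (n - 1)" using a01 by simp
      also have "\<dots> = exp (real (n - 1) * ln a)" by (simp add: exp_of_nat_mult)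
      finally show ?thesis by (simp add: \<kappa>_def)
    qed
    have "C1 * L \<le> \<kappa> / 2" using Lpos by (simp add: C1_def min_def field_simps split: if_splits)
    then have "C1 * L * real n \<le> \<kappa> / 2 * real n" by (rule mult_right_mono) simp
    then have "C1 * real n * L \<le> \<kappa> / 2 * real n" by (simp add: mult.commute mult.left_commute)
    moreover have "real (n - 1) = real n - 1" using n by simp
    ultimately have "C1 * real n * L + (- (real (n - 1) * \<kappa>)) \<le> \<kappa> + (- (\<kappa> / 2) * real n)"
      by (simp add: algebra_simps)
    then have "exp (C1 * real n * L) * exp (- (real (n - 1) * \<kappa>)) \<le> exp \<kappa> * exp (- (\<kappa> / 2) * real n)"
      by (simp add: exp_add[symmetric])
    then have "lam powr (- (C1 * real n)) * (\<gamma> * a ^ (n - 1)) \<le> Bn n"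
      unfolding e1 e2 Bn_def using \<gamma>1 by (simp add: mult.commute mult.left_commute)
    with le have "emeasure M (A n) \<le> ennreal (Bn n)" by (meson ennreal_leI order_trans)
    then show ?thesis using \<gamma>1 by (simp add: emeasure_eq_measure Bn_def ennreal_le_iff)
  qed
  have A_mem: "\<omega> \<in> A n" if \<omega>: "\<omega> \<in> space M" and n: "1 \<le> n" and v: "v \<in> generation N \<omega> n"
    and g: "real (Gamma N R P \<omega> v) \<le> C1 * real n" for \<omega> n v
  proof -
    have "lam powr (C1 * real n) \<le> lam powr real (Gamma N R P \<omega> v)"
      by (rule powr_mono'[OF g]) (use lam01 in auto)
    then have "lam powr (C1 * real n) \<le> lam ^ Gamma N R P \<omega> v" using lam01 by (simp add: powr_realpow)
    then have "lam powr (- (C1 * real n)) * lam powr (C1 * real n) \<le> lam powr (- (C1 * real n)) * lam ^ Gamma N R P \<omega> v"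
      by (rule mult_left_mono) simp
    then have "1 \<le> lam powr (- (C1 * real n)) * lam ^ Gamma N R P \<omega> v"
      using lam01 by (simp add: powr_add[symmetric])
    then have "ennreal 1 \<le> ennreal (lam powr (- (C1 * real n))) * ennreal (lam ^ Gamma N R P \<omega> v)"
      using lam01 by (simp add: ennreal_mult'[symmetric] ennreal_leI del: ennreal_1)
    also have "\<dots> \<le> ennreal (lam powr (- (C1 * real n))) * G.fn n \<omega>"
      by (intro mult_left_mono G.fn_ge v n) simp
    finally show ?thesis using \<omega> by (simp add: A_def)
  qed
  have Bn_exp: "Bn n \<le> exp (- C2 * real n)" if n: "n0 \<le> n" for n
  proof -
    have "4 * (ln \<gamma> + \<kappa>) / \<kappa> \<le> real n" using n0(2) n by linarith
    then have h1: "4 * (ln \<gamma> + \<kappa>) \<le> real n * \<kappa>" using \<kappa>pos by (simp only: pos_divide_le_eq)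
    have h2: "ln \<gamma> + \<kappa> + (- (\<kappa> / 2) * real n) \<le> - (\<kappa> / 4) * real n" using h1 by (simp add: algebra_simps)
    have e: "exp (ln \<gamma> + \<kappa> + (- (\<kappa> / 2) * real n)) = Bn n"
    proof -
      have "exp (ln \<gamma> + \<kappa> + (- (\<kappa> / 2) * real n)) = exp (ln \<gamma>) * exp \<kappa> * exp (- (\<kappa> / 2) * real n)"
        by (simp only: exp_add)
      moreover have "exp (ln \<gamma>) = \<gamma>" using \<gamma>1 by simp
      ultimately show ?thesis by (simp only: Bn_def)
    qed
    have c2: "C2 \<le> \<kappa> / 4" unfolding C2_def by (rule min.cobounded1)
    have h3: "- (\<kappa> / 4) * real n \<le> - C2 * real n" using c2 by (intro mult_right_mono) auto
    have "Bn n = exp (ln \<gamma> + \<kappa> + (- (\<kappa> / 2) * real n))" using e by simp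
    also have "\<dots> \<le> exp (- (\<kappa> / 4) * real n)" using h2 by (simp only: exp_le_cancel_iff)
    also have "\<dots> \<le> exp (- C2 * real n)" using h3 by (simp only: exp_le_cancel_iff)
    finally show ?thesis .
  qed
  have sumA: "summable (\<lambda>n. measure M (A n))"
  proof (rule summable_comparison_test'[of Bn 1])
    have "summable (\<lambda>n. (\<gamma> * exp \<kappa>) * exp (- (\<kappa> / 2)) ^ n)"
      by (rule summable_mult, rule summable_geometric) (use \<kappa>pos in simp)
    moreover have "Bn = (\<lambda>n. (\<gamma> * exp \<kappa>) * exp (- (\<kappa> / 2)) ^ n)"
    proof
      fix n :: nat
      have "exp (- (\<kappa> / 2)) ^ n = exp (real n * (- (\<kappa> / 2)))" by (rule exp_of_nat_mult[symmetric])
      also have "real n * (- (\<kappa> / 2)) = - (\<kappa> / 2) * real n" by (rule mult.commute)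
      finally show "Bn n = (\<gamma> * exp \<kappa>) * exp (- (\<kappa> / 2)) ^ n" by (simp only: Bn_def)
    qed
    ultimately show "summable Bn" by simp
    show "norm (measure M (A n)) \<le> Bn n" if "1 \<le> n" for n using A_bound[OF that] by simp
  qed
  have Gam_min: "\<exists>v\<in>generation N \<omega> n. real (Gamma N R P \<omega> v) \<le> C1 * real n"
    if "generation N \<omega> n \<noteq> {}" "real (Min (Gamma N R P \<omega> ` generation N \<omega> n)) \<le> C1 * real n" for \<omega> n
  proof -
    have "Min (Gamma N R P \<omega> ` generation N \<omega> n) \<in> Gamma N R P \<omega> ` generation N \<omega> n"
      by (rule Min_in) (use that(1) in \<open>simp_all add: finite_generation\<close>)
    then show ?thesis using that(2) by auto
  qed
  show ?thesis
  proof
    have AE: "AE \<omega> in M. eventually (\<lambda>n. \<omega> \<in> space M - A n) sequentially"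
      by (rule borel_cantelli_AE1[OF A_sets _ sumA]) (simp add: less_top[symmetric])
    show "AE \<omega> in M. \<forall>x :: nat \<Rightarrow> nat. (\<forall>n. in_tree N \<omega> (map x [0..<n])) \<longrightarrow>
            (\<exists>\<^sub>\<infinity>n. \<exists>j. j \<noteq> x n \<and> in_tree N \<omega> (map x [0..<n] @ [j])
                       \<and> P (subtree N R (map x [0..<n]) j \<omega>))"
      using AE
    proof (rule AE_mp)
      show "AE \<omega> in M. eventually (\<lambda>n. \<omega> \<in> space M - A n) sequentially \<longrightarrow> (\<forall>x :: nat \<Rightarrow> nat. (\<forall>n. in_tree N \<omega> (map x [0..<n])) \<longrightarrow>
            (\<exists>\<^sub>\<infinity>n. \<exists>j. j \<noteq> x n \<and> in_tree N \<omega> (map x [0..<n] @ [j])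
                       \<and> P (subtree N R (map x [0..<n]) j \<omega>)))"
      proof (rule AE_I2, intro impI allI)
        fix \<omega> and x :: "nat \<Rightarrow> nat"
        assume \<omega>: "\<omega> \<in> space M" and ev: "eventually (\<lambda>n. \<omega> \<in> space M - A n) sequentially"
          and path: "\<forall>n. in_tree N \<omega> (map x [0..<n])"
        show "\<exists>\<^sub>\<infinity>n. \<exists>j. j \<noteq> x n \<and> in_tree N \<omega> (map x [0..<n] @ [j]) \<and> P (subtree N R (map x [0..<n]) j \<omega>)"
        proof (rule ccontr)
          define Q where "Q = {n. \<exists>j. j \<noteq> x n \<and> in_tree N \<omega> (map x [0..<n] @ [j]) \<and> P (subtree N R (map x [0..<n]) j \<omega>)}"
          assume "\<not> ?thesis"
          then have finQ: "finite Q" unfolding Q_def INFM_iff_infinite by simp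
          have Gb: "Gamma N R P \<omega> (map x [0..<n]) \<le> card Q" for n
          proof -
            have "{k \<in> {2..length (map x [0..<n])}. \<exists>j. j \<noteq> (map x [0..<n]) ! (k - 1) \<and> in_tree N \<omega> (take (k - 1) (map x [0..<n]) @ [j])
                \<and> P (subtree N R (take (k - 1) (map x [0..<n])) j \<omega>)} \<subseteq> Suc ` Q"
            proof
              fix k assume k: "k \<in> {k \<in> {2..length (map x [0..<n])}. \<exists>j. j \<noteq> (map x [0..<n]) ! (k - 1) \<and> in_tree N \<omega> (take (k - 1) (map x [0..<n]) @ [j])
                \<and> P (subtree N R (take (k - 1) (map x [0..<n])) j \<omega>)}"
              then have kn: "2 \<le> k" "k \<le> n" by auto
              have t: "take (k - 1) (map x [0..<n]) = map x [0..<k - 1]" using kn by (simp add: take_map)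
              have nth: "(map x [0..<n]) ! (k - 1) = x (k - 1)" using kn by simp
              from k obtain j where j: "j \<noteq> (map x [0..<n]) ! (k - 1)" "in_tree N \<omega> (take (k - 1) (map x [0..<n]) @ [j])"
                "P (subtree N R (take (k - 1) (map x [0..<n])) j \<omega>)" by blast
              have "k - 1 \<in> Q" unfolding Q_def using j[unfolded t nth] by blast
              moreover have "k = Suc (k - 1)" using kn by simp
              ultimately show "k \<in> Suc ` Q" by blast
            qed
            then have "Gamma N R P \<omega> (map x [0..<n]) \<le> card (Suc ` Q)"
              unfolding Gamma_def by (intro card_mono) (use finQ in auto)
            also have "\<dots> \<le> card Q" by (rule card_image_le[OF finQ])
            finally show ?thesis .
          qed
          obtain N0 where N0: "\<And>n. N0 \<le> n \<Longrightarrow> \<omega> \<in> space M - A n" using ev unfolding eventually_sequentially by blast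
          define n where "n = max N0 (nat \<lceil>real (card Q) / C1\<rceil>) + 1"
          have n1: "1 \<le> n" by (simp add: n_def)
          have "real (card Q) / C1 \<le> real n" unfolding n_def by linarith
          then have cq: "real (card Q) \<le> C1 * real n" using C1pos by (simp add: field_simps)
          have v: "map x [0..<n] \<in> generation N \<omega> n" using path by (simp add: generation_def)
          have "real (Gamma N R P \<omega> (map x [0..<n])) \<le> C1 * real n"
            using Gb[of n] cq by (meson of_nat_le_iff order_trans)
          then have "\<omega> \<in> A n" by (rule A_mem[OF \<omega> n1 v])
          moreover have "\<omega> \<notin> A n" using N0[of n] by (simp add: n_def)
          ultimately show False by simp
        qed
      qed
    qed
    show "\<exists>C1 C2 :: real. 0 < C1 \<and> 0 < C2 \<and>
            (\<forall>n \<ge> 2. measure M {\<omega> \<in> space M. generation N \<omega> n \<noteq> {} \<and>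
                 real (Min (Gamma N R P \<omega> ` generation N \<omega> n)) \<le> C1 * real n}
               \<le> exp (- C2 * real n))"
    proof (intro exI conjI allI impI)
      show "0 < C1" by (fact C1pos)
      show "0 < C2" by (fact C2pos)
      fix n :: nat assume n2: "2 \<le> n"
      define S where "S = {\<omega> \<in> space M. generation N \<omega> n \<noteq> {} \<and> real (Min (Gamma N R P \<omega> ` generation N \<omega> n)) \<le> C1 * real n}"
      have "measure M S \<le> exp (- C2 * real n)"
      proof (cases "S \<in> sets M")
        case False then show ?thesis by (simp add: measure_notin_sets)
      next
        case Ssets: True
        show ?thesis
        proof (cases "n0 \<le> n")
          case True
          have "S \<subseteq> A n"
          proof
            fix \<omega> assume "\<omega> \<in> S"
            then have \<omega>: "\<omega> \<in> space M" "generation N \<omega> n \<noteq> {}" "real (Min (Gamma N R P \<omega> ` generation N \<omega> n)) \<le> C1 * real n"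
              by (auto simp: S_def)
            then obtain v where "v \<in> generation N \<omega> n" "real (Gamma N R P \<omega> v) \<le> C1 * real n" using Gam_min by blast
            then show "\<omega> \<in> A n" using A_mem[OF \<omega>(1)] n2 by simp
          qed
          then have "measure M S \<le> measure M (A n)" by (intro finite_measure_mono A_sets)
          also have "\<dots> \<le> Bn n" using A_bound n2 by simp
          also have "\<dots> \<le> exp (- C2 * real n)" by (rule Bn_exp[OF True])
          finally show ?thesis .
        next
          case False
          have "S \<subseteq> space M - E"
          proof
            fix \<omega> assume "\<omega> \<in> S"
            then have \<omega>: "\<omega> \<in> space M" "generation N \<omega> n \<noteq> {}" "real (Min (Gamma N R P \<omega> ` generation N \<omega> n)) \<le> C1 * real n"
              by (auto simp: S_def)
            then obtain v where v: "v \<in> generation N \<omega> n" "real (Gamma N R P \<omega> v) \<le> C1 * real n" using Gam_min by blast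
            have "C1 * real n \<le> 1 / (2 * real n0) * real n" by (intro mult_right_mono) (auto simp: C1_def)
            also have "\<dots> < 1" using False n0 by (simp add: field_simps)
            finally have "real (Gamma N R P \<omega> v) < 1" using v(2) by linarith
            then have "Gamma N R P \<omega> v = 0" by simp
            moreover have "\<omega> \<in> E \<Longrightarrow> 1 \<le> Gamma N R P \<omega> v"
              by (rule G.E_Gamma[OF n2 _ _ v(1)]) (auto simp: E_def)
            ultimately show "\<omega> \<in> space M - E" using \<omega> by auto
          qed
          then have "measure M S \<le> measure M (space M - E)" by (rule finite_measure_mono) (use E_sets in blast)
          also have "\<dots> = 1 - measure M E" by (rule prob_compl[OF E_sets])
          also have "\<dots> \<le> r" by (simp add: r_def)
          also have "r \<le> exp (- C2 * real n)"
          proof -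
            have "C2 \<le> - ln r / real n0" unfolding C2_def by (rule min.cobounded2)
            then have "ln r / real n0 * real n \<le> - C2 * real n"
              by (intro mult_right_mono) auto
            moreover have "ln r \<le> ln r / real n0 * real n"
            proof -
              have "real n / real n0 \<le> 1" using False by simp
              then have "ln r * 1 \<le> ln r * (real n / real n0)" using lnr by (intro mult_left_mono_neg) auto
              then show ?thesis by simp
            qed
            ultimately have "ln r \<le> - C2 * real n" by linarith
            then have "exp (ln r) \<le> exp (- C2 * real n)" by simp
            then show ?thesis using r by simp
          qed
          finally show ?thesis .
        qed
      qed
      then show "measure M {\<omega> \<in> space M. generation N \<omega> n \<noteq> {} \<and> real (Min (Gamma N R P \<omega> ` generation N \<omega> n)) \<le> C1 * real n}
               \<le> exp (- C2 * real n)" by (simp only: S_def)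
    qed
  qed
qed


end
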